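(* Let $V=(J,(V_j)_{j\in J},d,H)$ be a hypergraph system, let $(\nu_e)_{e\in H}$ be a pseudorandom system of measures on $V$, and let $e\in H$. Let $K$ be a finite set, $D\ge0$ an integer, and $P:\mathbb{R}^K\to\mathbb{R}$ a polynomial of degree at most $D$ in the $|K|$ variables, all of whose coefficients are bounded in magnitude by $M$. For each $k\in K$ let $f_k:V_e\to\mathbb{R}$ satisfy $|f_k(x)|\le\nu_e(x)+1$ for all $x\in V_e$. Then $$\Big|\mathbb{E}\Big((\nu_e(x_e)-1)\,P\big((\mathcal{D}_ef_k(x_e))_{k\in K}\big)\ \Big|\ x_e\in V_e\Big)\Big|=o_{N\to\infty;K,D,M}(1).$$
   Context: A hypergraph system is a quadruple $V=(J,(V_j)_{j\in J},d,H)$ where $J$ is a finite set, each $V_j$ is a finite nonempty set, $d\ge1$ is an integer and $H\subseteq\binom{J}{d}:=\{e\subseteq J:|e|=d\}$; for $e\subseteq J$ put $V_e:=\prod_{j\in e}V_j$. For a finite nonempty set $Z$ and $f:Z\to\mathbb{R}$, $\mathbb{E}(f(x)\mid x\in Z):=|Z|^{-1}\sum_{x\in Z}f(x)$; constraints written after the bar mean uniform averaging over all tuples satisfying them. All objects depend on a parameter $N$ ranging over a sequence tending to infinity while $J,d,H$ are fixed; implicit constants may depend on $J$. $o_{x\to0;y}(X)$ denotes a quantity bounded in magnitude by $c(x,y)X$ where $c(x,y)\to0$ as $x\to0$ for each fixed $y$ (here uniformly in the functions $f_k$ and $P$); $O_y(X)$ a quantity bounded by $C(y)X$. Cube notation: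 for a finite set $e$, $\{0,1\}^e$ is the set of tuples $\omega=(\omega_j)_{j\in e}$ with $\omega_j\in\{0,1\}$, and $0^e$ is the all-zero tuple; for $x^{(0)}_J,x^{(1)}_J\in V_J$, $e\subseteq J$ and $\omega\in\{0,1\}^e$, set $x^{(\omega)}_e:=(x^{(\omega_j)}_j)_{j\in e}\in V_e$ and $x^{(a)}_e:=(x^{(a)}_j)_{j\in e}$ for $a\in\{0,1\}$. A system of measures is a family of functions $\nu_e:V_e\to[0,\infty)$, $e\in H$, with $\mathbb{E}(\nu_e(x_e)\mid x_e\in V_e)=1+o_{N\to\infty}(1)$. For $e\in H$ and $f:V_e\to\mathbb{R}$, the dual function is $\mathcal{D}_ef(x^{(0)}_e):=\mathbb{E}\big(\prod_{\omega\in\{0,1\}^e,\ \omega\neq 0^e}f(x^{(\omega)}_e)\mid x^{(1)}_e\in V_e\big)$. The system is pseudorandom if: (i) $\mathcal{D}_e(\nu_e+1)(x_e)=O(1)$ for all $e\in H$, $x_e\in V_e$; (ii) for every choice of exponents $n_{e,\omega}\in\{0,1\}$, $\mathbb{E}\big(\prod_{e\in H}\prod_{\omega\in\{0,1\}^e}\nu_e(x^{(\omega)}_e)^{n_{e,\omega}}\mid x^{(0)}_J,x^{(1)}_J\in V_J\big)=1+o_{N\to\infty}(1)$; (iii) for every $e\in H$, $j\in e$, every choice of $n_{e,\omega}\in\{0,1\}$ and every integer $K\ge0$, $\mathbb{E}\Big(\mathbb{E}\big(\prod_{\omega\in\{0,1\}^e}\nu_e(x^{(\omega)}_e)^{n_{e,\omega}}\mid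 x^{(0)}_j,x^{(1)}_j\in V_j\big)^K\ \Big|\ x^{(0)}_{e\setminus\{j\}},x^{(1)}_{e\setminus\{j\}}\in V_{e\setminus\{j\}}\Big)=O_K(1)$. *)

theory Defs
  imports Complex_Main "HOL-Library.FuncSet"
begin

definition avg :: "'b set \<Rightarrow> ('b \<Rightarrow> real) \<Rightarrow> real" where
  "avg Z f = (\<Sum>x\<in>Z. f x) / real (card Z)"

abbreviation Vpts :: "('j \<Rightarrow> 'a set) \<Rightarrow> 'j set \<Rightarrow> ('j \<Rightarrow> 'a) set" where
  "Vpts V e \<equiv> PiE e V"

text \<open>The cube {0,1}^e (0 = False, 1 = True) and the zero tuple 0^e.\<close>
definition cube :: "'j set \<Rightarrow> ('j \<Rightarrow> bool) set" where
  "cube e = PiE e (\<lambda>_. UNIV)"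

definition zero_cube :: "'j set \<Rightarrow> ('j \<Rightarrow> bool)" where
  "zero_cube e = restrict (\<lambda>_. False) e"

definition mix :: "'j set \<Rightarrow> ('j \<Rightarrow> bool) \<Rightarrow> ('j \<Rightarrow> 'a) \<Rightarrow> ('j \<Rightarrow> 'a) \<Rightarrow> ('j \<Rightarrow> 'a)" where
  "mix e \<omega> x0 x1 = restrict (\<lambda>j. if \<omega> j then x1 j else x0 j) e"

definition dual :: "('j \<Rightarrow> 'a set) \<Rightarrow> 'j set \<Rightarrow> (('j \<Rightarrow> 'a) \<Rightarrow> real) \<Rightarrow> ('j \<Rightarrow> 'a) \<Rightarrow> real" where
  "dual V e f x0 = avg (Vpts V e)
     (\<lambda>x1. \<Prod>\<omega>\<in>cube e - {zero_cube e}. f (mix e \<omega> x0 x1))"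

text \<open>Hypergraph system (J, (V_j), d, H), with vertex sets V n j depending on the
  parameter N (here the sequence index n).\<close>
definition hypergraph_system ::
  "'j set \<Rightarrow> (nat \<Rightarrow> 'j \<Rightarrow> 'a set) \<Rightarrow> nat \<Rightarrow> 'j set set \<Rightarrow> bool" where
  "hypergraph_system J V d H \<longleftrightarrow> finite J \<and> d \<ge> 1 \<and>
     (\<forall>n. \<forall>j\<in>J. finite (V n j) \<and> V n j \<noteq> {}) \<and>
     H \<subseteq> {e. e \<subseteq> J \<and> card e = d}"

definition system_of_measures ::
  "(nat \<Rightarrow> 'j \<Rightarrow> 'a set) \<Rightarrow> 'j set set \<Rightarrow> (nat \<Rightarrow> 'j set \<Rightarrow> ('j \<Rightarrow> 'a) \<Rightarrow> real) \<Rightarrow> bool" where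
  "system_of_measures V H \<nu> \<longleftrightarrow>
     (\<forall>n. \<forall>e\<in>H. \<forall>x\<in>Vpts (V n) e. \<nu> n e x \<ge> 0) \<and>
     (\<forall>e\<in>H. (\<lambda>n. avg (Vpts (V n) e) (\<nu> n e)) \<longlonglongrightarrow> 1)"

text \<open>nu^{n_{e,\<omega>}} with exponent in {0,1} encoded as a boolean.\<close>
definition pw :: "bool \<Rightarrow> real \<Rightarrow> real" where
  "pw b t = (if b then t else 1)"

definition pseudorandom ::
  "'j set \<Rightarrow> (nat \<Rightarrow> 'j \<Rightarrow> 'a set) \<Rightarrow> 'j set set \<Rightarrow> (nat \<Rightarrow> 'j set \<Rightarrow> ('j \<Rightarrow> 'a) \<Rightarrow> real) \<Rightarrow> bool" where
  "pseudorandom J V H \<nu> \<longleftrightarrow>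
     system_of_measures V H \<nu> \<and>
     \<comment> \<open>(i)\<close>
     (\<exists>C. \<forall>\<^sub>F n in sequentially. \<forall>e\<in>H. \<forall>x\<in>Vpts (V n) e.
         \<bar>dual (V n) e (\<lambda>y. \<nu> n e y + 1) x\<bar> \<le> C) \<and>
     \<comment> \<open>(ii)\<close>
     (\<forall>ex :: 'j set \<Rightarrow> ('j \<Rightarrow> bool) \<Rightarrow> bool.
        (\<lambda>n. avg (Vpts (V n) J \<times> Vpts (V n) J)
           (\<lambda>(x0, x1). \<Prod>e\<in>H. \<Prod>\<omega>\<in>cube e. pw (ex e \<omega>) (\<nu> n e (mix e \<omega> x0 x1))))
        \<longlonglongrightarrow> 1) \<and>
     \<comment> \<open>(iii)\<close>
     (\<forall>e\<in>H. \<forall>j\<in>e. \<forall>ex :: ('j \<Rightarrow> bool) \<Rightarrow> bool. \<forall>K :: nat.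
        \<exists>C. \<forall>\<^sub>F n in sequentially.
          \<bar>avg (Vpts (V n) (e - {j}) \<times> Vpts (V n) (e - {j}))
             (\<lambda>(x0, x1). (avg (V n j \<times> V n j)
                (\<lambda>(y0, y1). \<Prod>\<omega>\<in>cube e.
                   pw (ex \<omega>) (\<nu> n e (mix e \<omega> (x0(j := y0)) (x1(j := y1)))))) ^ K)\<bar> \<le> C)"

definition monomials_le :: "'k set \<Rightarrow> nat \<Rightarrow> ('k \<Rightarrow> nat) set" where
  "monomials_le K D = {\<alpha>. \<alpha> \<in> extensional K \<and> sum \<alpha> K \<le> D}"

definition bounded_poly :: "'k set \<Rightarrow> nat \<Rightarrow> real \<Rightarrow> (('k \<Rightarrow> real) \<Rightarrow> real) \<Rightarrow> bool" where
  "bounded_poly K D M P \<longleftrightarrow>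
     (\<exists>c :: ('k \<Rightarrow> nat) \<Rightarrow> real.
        (\<forall>\<alpha>\<in>monomials_le K D. \<bar>c \<alpha>\<bar> \<le> M) \<and>
        (\<forall>y. P y = (\<Sum>\<alpha>\<in>monomials_le K D. c \<alpha> * (\<Prod>k\<in>K. y k ^ \<alpha> k))))"

end

theory Submission
  imports Defs "HOL-Analysis.Convex"
begin

lemma avg_cong: "(\<And>x. x \<in> A \<Longrightarrow> f x = g x) \<Longrightarrow> avg A f = avg A g"
  unfolding avg_def by (simp cong: sum.cong)

lemma avg_const: "finite A \<Longrightarrow> A \<noteq> {} \<Longrightarrow> avg A (\<lambda>_. c) = c"
  unfolding avg_def by simp

lemma avg_add: "avg A (\<lambda>x. f x + g x) = avg A f + avg A g"
  unfolding avg_def by (simp add: sum.distrib add_divide_distrib)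

lemma avg_diff: "avg A (\<lambda>x. f x - g x) = avg A f - avg A g"
  unfolding avg_def by (simp add: sum_subtractf diff_divide_distrib)

lemma avg_cmult: "avg A (\<lambda>x. c * f x) = c * avg A f"
  unfolding avg_def by (simp add: sum_distrib_left)

lemma avg_multc: "avg A (\<lambda>x. f x * c) = avg A f * c"
  unfolding avg_def by (simp add: sum_distrib_right)

lemma avg_sum: "avg A (\<lambda>x. \<Sum>s\<in>S. g s x) = (\<Sum>s\<in>S. avg A (g s))"
  unfolding avg_def by (simp add: sum.swap[of _ S] sum_divide_distrib)

lemma avg_mono: "(\<And>x. x \<in> A \<Longrightarrow> f x \<le> g x) \<Longrightarrow> avg A f \<le> avg A g"
  unfolding avg_def by (simp add: sum_mono divide_right_mono)

lemma avg_nonneg: "(\<And>x. x \<in> A \<Longrightarrow> 0 \<le> f x) \<Longrightarrow> 0 \<le> avg A f"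
  unfolding avg_def by (simp add: sum_nonneg)

lemma avg_abs: "\<bar>avg A f\<bar> \<le> avg A (\<lambda>x. \<bar>f x\<bar>)"
  unfolding avg_def by (simp add: abs_divide divide_right_mono sum_abs)

lemma avg_times: "avg (A \<times> B) (\<lambda>(x,y). g x y) = avg A (\<lambda>x. avg B (\<lambda>y. g x y))"
proof -
  have "avg (A \<times> B) (\<lambda>(x,y). g x y) = (\<Sum>x\<in>A. \<Sum>y\<in>B. g x y) / (real (card A) * real (card B))"
    unfolding avg_def by (simp add: sum.cartesian_product card_cartesian_product)
  also have "\<dots> = avg A (\<lambda>x. avg B (\<lambda>y. g x y))"
    unfolding avg_def by (simp add: sum_divide_distrib mult.commute)
  finally show ?thesis .
qed

lemma avg_CS: "(avg A (\<lambda>x. f x * g x))^2 \<le> avg A (\<lambda>x. (f x)^2) * avg A (\<lambda>x. (g x)^2)"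
proof -
  have "(\<Sum>x\<in>A. f x * g x)^2 \<le> (\<Sum>x\<in>A. (f x)^2) * (\<Sum>x\<in>A. (g x)^2)"
    by (rule Cauchy_Schwarz_ineq_sum)
  then have "(\<Sum>x\<in>A. f x * g x)^2 / (real (card A))^2 \<le> (\<Sum>x\<in>A. (f x)^2) * (\<Sum>x\<in>A. (g x)^2) / (real (card A))^2"
    by (simp add: divide_right_mono)
  then show ?thesis unfolding avg_def by (simp add: power_divide power2_eq_square)
qed

lemma card_avg: "finite A \<Longrightarrow> A \<noteq> {} \<Longrightarrow> real (card A) * avg A g = sum g A"
  unfolding avg_def by simp

lemma sum_PiE_insert:
  assumes "c \<notin> S"
  shows "(\<Sum>x\<in>PiE (insert c S) W. g x) = (\<Sum>y\<in>W c. \<Sum>h\<in>PiE S W. g (h(c:=y)))"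
proof -
  have "(\<Sum>x\<in>PiE (insert c S) W. g x) = (\<Sum>p\<in>W c \<times> PiE S W. g ((\<lambda>(y, h). h(c := y)) p))"
    unfolding PiE_insert_eq by (rule sum.reindex[OF inj_combinator[OF assms], unfolded comp_def])
  also have "\<dots> = (\<Sum>y\<in>W c. \<Sum>h\<in>PiE S W. g (h(c:=y)))"
    by (simp add: sum.cartesian_product split_def)
  finally show ?thesis .
qed

lemma card_PiE_insert:
  assumes "c \<notin> S" "finite S"
  shows "card (PiE (insert c S) W) = card (W c) * card (PiE S W)"
  using assms by (simp add: card_PiE)

lemma finite_PiE': "finite I \<Longrightarrow> (\<forall>k\<in>I. finite (W k)) \<Longrightarrow> finite (PiE I W)"
  by (simp add: finite_PiE)

lemma PiE_ne: "(\<forall>k\<in>I. W k \<noteq> {}) \<Longrightarrow> PiE I W \<noteq> {}"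
  by (simp add: PiE_eq_empty_iff)

lemma avg_resample:
  assumes "finite I" "c \<in> I" "\<forall>k\<in>I. finite (W k) \<and> W k \<noteq> {}"
  shows "avg (PiE I W) g = avg (PiE I W) (\<lambda>x. avg (W c) (\<lambda>s. g (x(c:=s))))"
proof -
  define S where "S = I - {c}"
  have I: "I = insert c S" "c \<notin> S" "finite S" using assms unfolding S_def by auto
  have fc: "finite (W c)" "W c \<noteq> {}" using assms by auto
  have "(\<Sum>x\<in>PiE I W. avg (W c) (\<lambda>s. g (x(c:=s)))) =
     (\<Sum>y\<in>W c. \<Sum>h\<in>PiE S W. avg (W c) (\<lambda>s. g (h(c:=s))))"
    unfolding I(1) by (subst sum_PiE_insert[OF I(2)]) simp
  also have "\<dots> = real (card (W c)) * (\<Sum>h\<in>PiE S W. avg (W c) (\<lambda>s. g (h(c:=s))))"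
    by simp
  also have "\<dots> = (\<Sum>h\<in>PiE S W. \<Sum>s\<in>W c. g (h(c:=s)))"
    using fc by (simp add: sum_distrib_left card_avg)
  also have "\<dots> = (\<Sum>x\<in>PiE I W. g x)"
    unfolding I(1) by (subst sum_PiE_insert[OF I(2)]) (rule sum.swap)
  finally show ?thesis unfolding avg_def by simp
qed

lemma avg_PiE_drop:
  assumes "finite T" "S \<inter> T = {}" "\<forall>k\<in>S \<union> T. finite (W k) \<and> W k \<noteq> {}" "finite S"
  shows "avg (PiE (S \<union> T) W) (\<lambda>x. g (restrict x S)) = avg (PiE S W) g"
  using assms
proof (induction T rule: finite_induct)
  case empty
  have "avg (PiE S W) (\<lambda>x. g (restrict x S)) = avg (PiE S W) g"
    by (rule avg_cong) (simp add: PiE_restrict)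
  then show ?case by (simp only: Un_empty_right)
next
  case (insert c T)
  have c: "c \<notin> S \<union> T" using insert by auto
  have fc: "finite (W c)" "W c \<noteq> {}" using insert by auto
  have eq: "S \<union> insert c T = insert c (S \<union> T)" by auto
  have r: "\<And>h y. restrict (h(c:=y)) S = restrict h S" using insert(4)
    by (auto simp: restrict_def fun_eq_iff)
  have "avg (PiE (S \<union> insert c T) W) (\<lambda>x. g (restrict x S))
      = (\<Sum>y\<in>W c. \<Sum>h\<in>PiE (S \<union> T) W. g (restrict h S)) / real (card (PiE (insert c (S \<union> T)) W))"
    unfolding avg_def eq by (subst sum_PiE_insert[OF c]) (simp add: r)
  also have "\<dots> = avg (PiE (S \<union> T) W) (\<lambda>x. g (restrict x S))"
    using fc c insert by (simp add: card_PiE_insert avg_def)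
  also have "\<dots> = avg (PiE S W) g" by (rule insert.IH) (use insert.prems in auto)
  finally show ?case .
qed

lemma avg_PiE_restrict:
  assumes "finite I" "S \<subseteq> I" "\<forall>k\<in>I. finite (W k) \<and> W k \<noteq> {}"
  shows "avg (PiE I W) (\<lambda>x. g (restrict x S)) = avg (PiE S W) g"
proof -
  have "I = S \<union> (I - S)" using assms by auto
  then show ?thesis using avg_PiE_drop[of "I - S" S W g] assms
    by (metis Diff_disjoint Int_commute finite_Diff finite_subset)
qed

lemma avg_pair_restrict:
  assumes "finite I" "S \<subseteq> I" "\<forall>k\<in>I. finite (W k) \<and> W k \<noteq> {}"
  shows "avg (PiE I W \<times> PiE I W) (\<lambda>(x,y). g (restrict x S) (restrict y S)) = avg (PiE S W \<times> PiE S W) (\<lambda>(x,y). g x y)"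
proof -
  have "avg (PiE I W \<times> PiE I W) (\<lambda>(x,y). g (restrict x S) (restrict y S))
     = avg (PiE I W) (\<lambda>x. avg (PiE I W) (\<lambda>y. g (restrict x S) (restrict y S)))" by (rule avg_times)
  also have "\<dots> = avg (PiE I W) (\<lambda>x. (\<lambda>x'. avg (PiE S W) (\<lambda>y. g x' y)) (restrict x S))"
    using avg_PiE_restrict[OF assms] by simp
  also have "\<dots> = avg (PiE S W) (\<lambda>x'. avg (PiE S W) (\<lambda>y. g x' y))"
    by (rule avg_PiE_restrict[OF assms])
  also have "\<dots> = avg (PiE S W \<times> PiE S W) (\<lambda>(x,y). g x y)" by (rule avg_times[symmetric])
  finally show ?thesis .
qed

datatype 'i lab = U0 | U1 | XL | YL 'i

locale core =
  fixes e :: "'j set" and W :: "'j \<Rightarrow> 'a set" and nu :: "('j \<Rightarrow> 'a) \<Rightarrow> real" and I :: "'i set"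
  assumes fin_e: "finite e" and fin_W: "\<And>k. k \<in> e \<Longrightarrow> finite (W k)"
    and ne_W: "\<And>k. k \<in> e \<Longrightarrow> W k \<noteq> {}"
    and fin_I: "finite I" and nu_nonneg: "\<And>x. x \<in> PiE e W \<Longrightarrow> 0 \<le> nu x"
begin

definition X where "X = PiE e W"
definition LS :: "'i lab set" where "LS = insert U0 (insert U1 (insert XL (YL ` I)))"
definition Om where "Om = PiE LS (\<lambda>_. X)"
definition pt :: "('i lab \<Rightarrow> 'j \<Rightarrow> 'a) \<Rightarrow> ('j \<Rightarrow> 'i lab) \<Rightarrow> 'j \<Rightarrow> 'a" where
  "pt \<xi> \<sigma> = restrict (\<lambda>k. \<xi> (\<sigma> k) k) e"
definition upd :: "('i lab \<Rightarrow> 'j \<Rightarrow> 'a) \<Rightarrow> 'i lab \<Rightarrow> 'j \<Rightarrow> 'a \<Rightarrow> ('i lab \<Rightarrow> 'j \<Rightarrow> 'a)" where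
  "upd \<xi> l k s = \<xi>(l := (\<xi> l)(k := s))"
definition src :: "'j set \<Rightarrow> 'i \<Rightarrow> ('j \<Rightarrow> bool) \<Rightarrow> 'j \<Rightarrow> 'i lab" where
  "src R i \<theta> k = (if k \<in> R then (if \<theta> k then YL i else XL) else (if \<theta> k then U1 else U0))"
definition Z where "Z R = {\<theta> \<in> cube e. \<forall>k\<in>R. \<not> \<theta> k}"
definition NZ where "NZ R = cube e - Z R"
definition Phi where
  "Phi f R \<xi> = (\<Prod>\<theta>\<in>Z R. nu (pt \<xi> (src R undefined \<theta>)) - 1) *
               (\<Prod>i\<in>I. \<Prod>\<theta>\<in>NZ R. f i (pt \<xi> (src R i \<theta>)))"
definition T where "T f R = avg Om (Phi f R)"

lemma fin_X: "finite X" unfolding X_def using fin_e fin_W by (simp add: finite_PiE)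
lemma ne_X: "X \<noteq> {}" unfolding X_def using ne_W by (simp add: PiE_eq_empty_iff)
lemma fin_LS: "finite LS" unfolding LS_def using fin_I by simp
lemma fin_Om: "finite Om" unfolding Om_def using fin_LS fin_X by (simp add: finite_PiE)
lemma ne_Om: "Om \<noteq> {}" unfolding Om_def using ne_X by (simp add: PiE_eq_empty_iff)
lemma fin_cube: "finite (cube e)" unfolding cube_def using fin_e by (simp add: finite_PiE)

lemma pt_in: "\<xi> \<in> Om \<Longrightarrow> (\<And>k. k \<in> e \<Longrightarrow> \<sigma> k \<in> LS) \<Longrightarrow> pt \<xi> \<sigma> \<in> X"
  unfolding pt_def Om_def X_def by (auto simp: PiE_iff)

lemma src_LS: "i \<in> I \<Longrightarrow> src R i \<theta> k \<in> LS"
  unfolding src_def LS_def by auto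

lemma srcZ_LS: "\<theta> \<in> Z R \<Longrightarrow> k \<in> e \<Longrightarrow> src R i \<theta> k \<in> LS"
  unfolding src_def LS_def Z_def by auto

lemma upd_in: "\<xi> \<in> Om \<Longrightarrow> l \<in> LS \<Longrightarrow> k \<in> e \<Longrightarrow> s \<in> W k \<Longrightarrow> upd \<xi> l k s \<in> Om"
  unfolding upd_def Om_def X_def by (auto simp: PiE_iff extensional_def)

lemma pt_upd: "pt (upd \<xi> l k s) \<sigma> = (if k \<in> e \<and> \<sigma> k = l then (pt \<xi> \<sigma>)(k := s) else pt \<xi> \<sigma>)"
  unfolding pt_def upd_def by (auto simp: fun_eq_iff restrict_def)

lemma pt_upd_other: "\<sigma> k \<noteq> l \<Longrightarrow> pt (upd \<xi> l k s) \<sigma> = pt \<xi> \<sigma>"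
  by (simp add: pt_upd)

lemma upd_comm: "l \<noteq> l' \<Longrightarrow> upd (upd \<xi> l k s) l' k' t = upd (upd \<xi> l' k' t) l k s"
  unfolding upd_def by (auto simp: fun_eq_iff)

lemma upd_same: "upd (upd \<xi> l k s) l k t = upd \<xi> l k t"
  unfolding upd_def by (auto simp: fun_eq_iff)

lemma upd_apply_same: "upd \<xi> l k s l k = s"
  unfolding upd_def by simp

lemma upd_apply_other: "l' \<noteq> l \<Longrightarrow> upd \<xi> l k s l' = \<xi> l'"
  unfolding upd_def by simp

lemma RS:
  assumes "l \<in> LS" "k \<in> e"
  shows "avg Om g = avg Om (\<lambda>\<xi>. avg (W k) (\<lambda>s. g (upd \<xi> l k s)))"
proof -
  define L' where "L' = LS - {l}"
  have L: "LS = insert l L'" "l \<notin> L'" "finite L'" using assms fin_LS unfolding L'_def by auto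
  have Xr: "\<And>G. avg X G = avg X (\<lambda>x. avg (W k) (\<lambda>s. G (x(k:=s))))"
    unfolding X_def by (rule avg_resample) (use fin_e fin_W ne_W assms in auto)
  have Xs: "\<And>G. sum G X = (\<Sum>x\<in>X. avg (W k) (\<lambda>s. G (x(k:=s))))"
    using card_avg[OF fin_X ne_X] Xr by metis
  have "(\<Sum>\<xi>\<in>Om. avg (W k) (\<lambda>s. g (upd \<xi> l k s)))
      = (\<Sum>x\<in>X. \<Sum>h\<in>PiE L' (\<lambda>_. X). avg (W k) (\<lambda>s. g (h(l := x(k:=s)))))"
    unfolding Om_def L(1) by (subst sum_PiE_insert[OF L(2)]) (simp add: upd_def)
  also have "\<dots> = (\<Sum>h\<in>PiE L' (\<lambda>_. X). \<Sum>x\<in>X. avg (W k) (\<lambda>s. g (h(l := x(k:=s)))))"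
    by (rule sum.swap)
  also have "\<dots> = (\<Sum>h\<in>PiE L' (\<lambda>_. X). \<Sum>x\<in>X. g (h(l := x)))"
    using Xs[of "\<lambda>x. g (_(l := x))"] by simp
  also have "\<dots> = (\<Sum>\<xi>\<in>Om. g \<xi>)"
    unfolding Om_def L(1) by (subst sum_PiE_insert[OF L(2)]) (rule sum.swap)
  finally show ?thesis unfolding avg_def by simp
qed

lemma PAIR:
  "avg Om (\<lambda>\<xi>. F (\<xi> U0) (\<xi> U1)) = avg (X \<times> X) (\<lambda>(x,y). F x y)"
proof -
  have "avg Om (\<lambda>\<xi>. F (\<xi> U0) (\<xi> U1)) = avg (PiE ({U0,U1}::'i lab set) (\<lambda>_. X)) (\<lambda>\<zeta>. F (\<zeta> U0) (\<zeta> U1))"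
    unfolding Om_def using avg_PiE_restrict[of LS "{U0,U1}" "\<lambda>_. X" "\<lambda>\<zeta>. F (\<zeta> U0) (\<zeta> U1)"]
      fin_LS fin_X ne_X by (simp add: LS_def)
  also have "\<dots> = avg (X \<times> X) (\<lambda>(x,y). F x y)"
  proof -
    have "(\<Sum>\<zeta>\<in>PiE (insert U0 {U1::'i lab}) (\<lambda>_. X). F (\<zeta> U0) (\<zeta> U1)) = (\<Sum>y\<in>X. \<Sum>h\<in>PiE {U1::'i lab} (\<lambda>_. X). F y (h U1))"
      by (subst sum_PiE_insert) auto
    also have "\<dots> = (\<Sum>y\<in>X. \<Sum>y'\<in>X. F y y')"
      by (subst sum_PiE_insert) auto
    finally have 1: "(\<Sum>\<zeta>\<in>PiE {U0,U1::'i lab} (\<lambda>_. X). F (\<zeta> U0) (\<zeta> U1)) = (\<Sum>y\<in>X. \<Sum>y'\<in>X. F y y')" .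
    have 2: "card (PiE {U0,U1::'i lab} (\<lambda>_. X)) = card X * card X" by (simp add: card_PiE)
    show ?thesis unfolding avg_def using 1 2 by (simp add: sum.cartesian_product card_cartesian_product split_def)
  qed
  finally show ?thesis .
qed

end

context core
begin

lemma Z_empty: "Z {} = cube e" unfolding Z_def by auto
lemma NZ_empty: "NZ {} = {}" unfolding NZ_def Z_def by auto

lemma pt_src_empty: "pt \<xi> (src {} u \<theta>) = mix e \<theta> (\<xi> U0) (\<xi> U1)"
  unfolding pt_def src_def mix_def by (auto simp: fun_eq_iff restrict_def)

lemma T_empty: "T f {} = avg (X \<times> X) (\<lambda>(x,y). \<Prod>\<theta>\<in>cube e. nu (mix e \<theta> x y) - 1)"
proof -
  have "T f {} = avg Om (\<lambda>\<xi>. (\<lambda>x y. \<Prod>\<theta>\<in>cube e. nu (mix e \<theta> x y) - 1) (\<xi> U0) (\<xi> U1))"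
    unfolding T_def Phi_def Z_empty NZ_empty pt_src_empty by simp
  also have "\<dots> = avg (X \<times> X) (\<lambda>(x,y). \<Prod>\<theta>\<in>cube e. nu (mix e \<theta> x y) - 1)"
    by (rule PAIR)
  finally show ?thesis .
qed

lemma Z_full: "Z e = {zero_cube e}"
  unfolding Z_def cube_def zero_cube_def by (auto simp: fun_eq_iff PiE_iff extensional_def)

lemma NZ_full: "NZ e = cube e - {zero_cube e}"
  unfolding NZ_def Z_full ..

lemma pt_src_zero: "\<xi> \<in> Om \<Longrightarrow> pt \<xi> (src e u (zero_cube e)) = \<xi> XL"
  unfolding pt_def src_def zero_cube_def Om_def X_def LS_def
  by (auto simp: fun_eq_iff restrict_def PiE_iff extensional_def)

lemma pt_src_full: "pt \<xi> (src e i \<theta>) = mix e \<theta> (\<xi> XL) (\<xi> (YL i))"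
  unfolding pt_def src_def mix_def by (auto simp: fun_eq_iff restrict_def)

lemma mix_zero: "x \<in> X \<Longrightarrow> mix e (zero_cube e) x y = x"
  unfolding mix_def zero_cube_def X_def by (auto simp: fun_eq_iff restrict_def PiE_iff extensional_def)

lemma Om_X: "\<xi> \<in> Om \<Longrightarrow> l \<in> LS \<Longrightarrow> \<xi> l \<in> X"
  unfolding Om_def by auto

definition Fd where "Fd f i x y = (\<Prod>\<theta>\<in>cube e - {zero_cube e}. f i (mix e \<theta> x y))"

lemma dual_Fd: "dual W e (f i) x = avg X (Fd f i x)"
  unfolding dual_def Fd_def X_def ..

definition unY :: "'i lab \<Rightarrow> 'i" where "unY l = (case l of YL i \<Rightarrow> i | _ \<Rightarrow> undefined)"

lemma sum_prod_YL:
  fixes G :: "'i \<Rightarrow> ('j \<Rightarrow> 'a) \<Rightarrow> real"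
  shows
  "(\<Sum>h\<in>PiE (YL ` I) (\<lambda>_. X). \<Prod>i\<in>I. G i (h (YL i))) = (\<Prod>i\<in>I. \<Sum>y\<in>X. G i y)"
proof -
  have inj: "inj_on YL I" by (simp add: inj_on_def)
  have "(\<Sum>h\<in>PiE (YL ` I) (\<lambda>_. X). \<Prod>i\<in>I. G i (h (YL i)))
      = (\<Sum>h\<in>PiE (YL ` I) (\<lambda>_. X). \<Prod>l\<in>YL ` I. G (unY l) (h l))"
    by (simp add: prod.reindex[OF inj] unY_def)
  also have "\<dots> = (\<Prod>l\<in>YL ` I. \<Sum>y\<in>X. G (unY l) y)"
    using prod_sum_PiE[of "YL ` I" "\<lambda>_. X" "\<lambda>l y. G (unY l) y"] fin_I fin_X by simp
  also have "\<dots> = (\<Prod>i\<in>I. \<Sum>y\<in>X. G i y)"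
    by (simp add: prod.reindex[OF inj] unY_def)
  finally show ?thesis .
qed

lemma T_full: "T f e = avg X (\<lambda>x. (nu x - 1) * (\<Prod>i\<in>I. dual W e (f i) x))"
proof -
  define S where "S = insert XL (YL ` I)"
  define g where "g = (\<lambda>\<zeta>. (nu (\<zeta> XL) - 1) * (\<Prod>i\<in>I. Fd f i (\<zeta> XL) (\<zeta> (YL i))))"
  have "T f e = avg Om (\<lambda>\<xi>. g (restrict \<xi> S))"
    unfolding T_def
  proof (rule avg_cong)
    fix \<xi> assume "\<xi> \<in> Om"
    have "\<xi> XL \<in> X" using Om_X[OF \<open>\<xi> \<in> Om\<close>, of XL] by (simp add: LS_def)
    then show "Phi f e \<xi> = g (restrict \<xi> S)"
      unfolding Phi_def Z_full NZ_full g_def S_def Fd_def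
      by (simp add: pt_src_full mix_zero)
  qed
  also have "\<dots> = avg (PiE S (\<lambda>_. X)) g"
    unfolding Om_def by (rule avg_PiE_restrict) (use fin_LS fin_X ne_X in \<open>auto simp: S_def LS_def\<close>)
  also have "\<dots> = avg X (\<lambda>x. (nu x - 1) * (\<Prod>i\<in>I. avg X (Fd f i x)))"
  proof -
    have XL: "XL \<notin> YL ` I" by auto
    have "sum g (PiE S (\<lambda>_. X)) = (\<Sum>x\<in>X. \<Sum>h\<in>PiE (YL ` I) (\<lambda>_. X). (nu x - 1) * (\<Prod>i\<in>I. Fd f i x (h (YL i))))"
      unfolding S_def by (subst sum_PiE_insert[OF XL]) (simp add: g_def)
    also have "\<dots> = (\<Sum>x\<in>X. (nu x - 1) * (\<Prod>i\<in>I. \<Sum>y\<in>X. Fd f i x y))"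
      by (simp add: sum_distrib_left[symmetric] sum_prod_YL[of "\<lambda>i y. Fd f i _ y"])
    also have "\<dots> = (\<Sum>x\<in>X. (nu x - 1) * (real (card X) ^ card I * (\<Prod>i\<in>I. avg X (Fd f i x))))"
      by (simp add: card_avg[OF fin_X ne_X, symmetric] prod.distrib)
    finally have 1: "sum g (PiE S (\<lambda>_. X)) = real (card X) ^ card I * (\<Sum>x\<in>X. (nu x - 1) * (\<Prod>i\<in>I. avg X (Fd f i x)))"
      by (simp add: sum_distrib_left mult_ac)
    have 2: "card (PiE S (\<lambda>_. X)) = card X * card X ^ card I"
      unfolding S_def using fin_I XL by (simp add: card_PiE card_image inj_on_def)
    have "card X > 0" using fin_X ne_X by (simp add: card_gt_0_iff)
    then show ?thesis unfolding avg_def 1 2 by simp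
  qed
  finally show ?thesis by (simp add: dual_Fd)
qed

end

context core
begin

definition Cj where "Cj j = {\<theta> \<in> cube e. \<theta> j}"
definition a where "a f R j i \<xi> = (\<Prod>\<theta>\<in>Cj j. f i (pt \<xi> (src R i \<theta>)))"
definition b where "b f R j \<xi> = (\<Prod>\<theta>\<in>Z R. nu (pt \<xi> (src R undefined \<theta>)) - 1) *
     (\<Prod>i\<in>I. \<Prod>\<theta>\<in>{\<theta>\<in>NZ R. \<not> \<theta> j}. f i (pt \<xi> (src R i \<theta>)))"
definition Bp where "Bp f R j \<xi> = avg (W j) (\<lambda>s. b f R j (upd \<xi> XL j s))"
definition abar where "abar f R j i \<xi> = avg (W j) (\<lambda>s. a f R j i (upd \<xi> (YL i) j s))"

lemma fin_Z: "finite (Z R)" unfolding Z_def using fin_cube by simp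
lemma fin_NZ: "finite (NZ R)" unfolding NZ_def using fin_cube by simp
lemma fin_Cj: "finite (Cj j)" unfolding Cj_def using fin_cube by simp

lemma Phi_split:
  assumes "j \<in> R"
  shows "Phi f R \<xi> = (\<Prod>i\<in>I. a f R j i \<xi>) * b f R j \<xi>"
proof -
  have NZ: "NZ R = Cj j \<union> {\<theta>\<in>NZ R. \<not> \<theta> j}" and dis: "Cj j \<inter> {\<theta>\<in>NZ R. \<not> \<theta> j} = {}"
    using assms unfolding NZ_def Z_def Cj_def by auto
  have "\<And>i. (\<Prod>\<theta>\<in>NZ R. f i (pt \<xi> (src R i \<theta>))) =
     (\<Prod>\<theta>\<in>Cj j. f i (pt \<xi> (src R i \<theta>))) * (\<Prod>\<theta>\<in>{\<theta>\<in>NZ R. \<not> \<theta> j}. f i (pt \<xi> (src R i \<theta>)))"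
    by (subst NZ, rule prod.union_disjoint) (use fin_Cj fin_NZ dis in auto)
  then show ?thesis unfolding Phi_def a_def b_def by (simp add: prod.distrib mult_ac)
qed

lemma a_upd_other:
  assumes "j \<in> R" "l \<noteq> YL i"
  shows "a f R j i (upd \<xi> l j s) = a f R j i \<xi>"
  unfolding a_def
  by (rule prod.cong[OF refl], rule arg_cong[where f="f i"], rule pt_upd_other)
     (use assms in \<open>auto simp: src_def Cj_def\<close>)

lemma b_upd_other:
  assumes "j \<in> R" "l \<noteq> XL"
  shows "b f R j (upd \<xi> l j s) = b f R j \<xi>"
proof -
  have 1: "\<And>\<theta>. \<theta> \<in> Z R \<Longrightarrow> pt (upd \<xi> l j s) (src R undefined \<theta>) = pt \<xi> (src R undefined \<theta>)"
    by (rule pt_upd_other) (use assms in \<open>auto simp: src_def Z_def\<close>)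
  have 2: "\<And>i \<theta>. \<theta> \<in> {\<theta>\<in>NZ R. \<not> \<theta> j} \<Longrightarrow> pt (upd \<xi> l j s) (src R i \<theta>) = pt \<xi> (src R i \<theta>)"
    by (rule pt_upd_other) (use assms in \<open>auto simp: src_def\<close>)
  have 3: "\<And>i. (\<Prod>\<theta>\<in>{\<theta>\<in>NZ R. \<not> \<theta> j}. f i (pt (upd \<xi> l j s) (src R i \<theta>))) = (\<Prod>\<theta>\<in>{\<theta>\<in>NZ R. \<not> \<theta> j}. f i (pt \<xi> (src R i \<theta>)))"
    by (rule prod.cong[OF refl]) (simp only: 2)
  have 4: "(\<Prod>\<theta>\<in>Z R. nu (pt (upd \<xi> l j s) (src R undefined \<theta>)) - 1) = (\<Prod>\<theta>\<in>Z R. nu (pt \<xi> (src R undefined \<theta>)) - 1)"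
    by (rule prod.cong[OF refl]) (simp only: 1)
  show ?thesis unfolding b_def by (simp only: 3 4)
qed

lemma LS_XL: "XL \<in> LS" and LS_U0: "U0 \<in> LS" and LS_U1: "U1 \<in> LS" and LS_YL: "i \<in> I \<Longrightarrow> YL i \<in> LS"
  unfolding LS_def by auto

lemma S2:
  assumes "j \<in> R" "j \<in> e"
  shows "T f R = avg Om (\<lambda>\<xi>. (\<Prod>i\<in>I. a f R j i \<xi>) * Bp f R j \<xi>)"
proof -
  have "T f R = avg Om (\<lambda>\<xi>. avg (W j) (\<lambda>s. Phi f R (upd \<xi> XL j s)))"
    unfolding T_def by (rule RS[OF LS_XL assms(2)])
  also have "\<dots> = avg Om (\<lambda>\<xi>. (\<Prod>i\<in>I. a f R j i \<xi>) * Bp f R j \<xi>)"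
    unfolding Phi_split[OF assms(1)] Bp_def
    by (simp add: a_upd_other[OF assms(1)] avg_cmult)
  finally show ?thesis .
qed

lemma abar_upd_other:
  assumes "j \<in> R" "i' \<noteq> i"
  shows "abar f R j i (upd \<xi> (YL i') j t) = abar f R j i \<xi>"
  unfolding abar_def
  by (simp add: upd_comm[of "YL i'" "YL i"] assms a_upd_other)

lemma Bp_upd_other:
  assumes "j \<in> R" "l \<noteq> XL"
  shows "Bp f R j (upd \<xi> l j t) = Bp f R j \<xi>"
  unfolding Bp_def
  by (simp add: upd_comm[of l XL] assms b_upd_other)

lemma S3:
  assumes "j \<in> R" "j \<in> e"
  shows "avg Om (\<lambda>\<xi>. (\<Prod>i\<in>I. a f R j i \<xi>) * Bp f R j \<xi>) = avg Om (\<lambda>\<xi>. (\<Prod>i\<in>I. abar f R j i \<xi>) * Bp f R j \<xi>)"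
proof -
  have "\<And>J'. J' \<subseteq> I \<Longrightarrow> avg Om (\<lambda>\<xi>. (\<Prod>i\<in>J'. abar f R j i \<xi>) * (\<Prod>i\<in>I - J'. a f R j i \<xi>) * Bp f R j \<xi>)
        = avg Om (\<lambda>\<xi>. (\<Prod>i\<in>I. a f R j i \<xi>) * Bp f R j \<xi>)"
  proof -
    fix J' assume "J' \<subseteq> I"
    have "finite J'" using \<open>J' \<subseteq> I\<close> fin_I finite_subset by blast
    then show "avg Om (\<lambda>\<xi>. (\<Prod>i\<in>J'. abar f R j i \<xi>) * (\<Prod>i\<in>I - J'. a f R j i \<xi>) * Bp f R j \<xi>)
        = avg Om (\<lambda>\<xi>. (\<Prod>i\<in>I. a f R j i \<xi>) * Bp f R j \<xi>)"
      using \<open>J' \<subseteq> I\<close>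
    proof (induction J' rule: finite_subset_induct)
      case empty
      then show ?case by simp
    next
      case (insert i1 F)
      define rest where "rest = (\<lambda>\<xi>. (\<Prod>i\<in>F. abar f R j i \<xi>) * (\<Prod>i\<in>I - insert i1 F. a f R j i \<xi>) * Bp f R j \<xi>)"
      have split: "\<And>\<xi>. (\<Prod>i\<in>I - F. a f R j i \<xi>) = a f R j i1 \<xi> * (\<Prod>i\<in>I - insert i1 F. a f R j i \<xi>)"
      proof -
        fix \<xi>
        have eq: "I - F = insert i1 (I - insert i1 F)" using insert by auto
        have "(\<Prod>i\<in>I - F. a f R j i \<xi>) = (\<Prod>i\<in>insert i1 (I - insert i1 F). a f R j i \<xi>)"
          by (subst eq) (rule refl)
        also have "\<dots> = a f R j i1 \<xi> * (\<Prod>i\<in>I - insert i1 F. a f R j i \<xi>)"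
          by (rule prod.insert) (use fin_I in auto)
        finally show "(\<Prod>i\<in>I - F. a f R j i \<xi>) = a f R j i1 \<xi> * (\<Prod>i\<in>I - insert i1 F. a f R j i \<xi>)" .
      qed
      have old: "\<And>\<xi>. (\<Prod>i\<in>F. abar f R j i \<xi>) * (\<Prod>i\<in>I - F. a f R j i \<xi>) * Bp f R j \<xi> = rest \<xi> * a f R j i1 \<xi>"
        unfolding rest_def split by (simp add: mult_ac)
      have new: "\<And>\<xi>. (\<Prod>i\<in>insert i1 F. abar f R j i \<xi>) * (\<Prod>i\<in>I - insert i1 F. a f R j i \<xi>) * Bp f R j \<xi> = rest \<xi> * abar f R j i1 \<xi>"
        unfolding rest_def using insert by (simp add: mult_ac)
      have rest_upd: "\<And>\<xi> s. rest (upd \<xi> (YL i1) j s) = rest \<xi>"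
      proof -
        fix \<xi> s
        have 1: "(\<Prod>i\<in>F. abar f R j i (upd \<xi> (YL i1) j s)) = (\<Prod>i\<in>F. abar f R j i \<xi>)"
          by (rule prod.cong[OF refl], rule abar_upd_other) (use assms insert in auto)
        have 2: "(\<Prod>i\<in>I - insert i1 F. a f R j i (upd \<xi> (YL i1) j s)) = (\<Prod>i\<in>I - insert i1 F. a f R j i \<xi>)"
          by (rule prod.cong[OF refl], rule a_upd_other) (use assms insert in auto)
        show "rest (upd \<xi> (YL i1) j s) = rest \<xi>"
          unfolding rest_def 1 2 by (simp add: Bp_upd_other assms)
      qed
      have "avg Om (\<lambda>\<xi>. rest \<xi> * abar f R j i1 \<xi>) = avg Om (\<lambda>\<xi>. avg (W j) (\<lambda>s. rest (upd \<xi> (YL i1) j s) * a f R j i1 (upd \<xi> (YL i1) j s)))"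
        unfolding rest_upd abar_def by (simp add: avg_cmult)
      also have "\<dots> = avg Om (\<lambda>\<xi>. rest \<xi> * a f R j i1 \<xi>)"
        by (rule RS[symmetric]) (use insert assms in \<open>auto simp: LS_YL\<close>)
      finally show ?case using insert.IH unfolding old new by simp
    qed
  qed
  from this[of I] show ?thesis by simp
qed

end

lemma prod_flip:
  assumes "j \<in> e" "finite e" "\<And>\<theta> c. P (\<theta>(j:=c)) = P \<theta>"
  shows "prod g {\<theta>\<in>cube e. P \<theta>} = prod g {\<theta>\<in>cube e. P \<theta> \<and> \<not> \<theta> j} * prod (\<lambda>\<theta>. g (\<theta>(j:=True))) {\<theta>\<in>cube e. P \<theta> \<and> \<not> \<theta> j}"
proof -
  define A where "A = {\<theta>\<in>cube e. P \<theta> \<and> \<not> \<theta> j}"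
  define B where "B = {\<theta>\<in>cube e. P \<theta> \<and> \<theta> j}"
  have fc: "finite (cube e)" unfolding cube_def using assms by (simp add: finite_PiE)
  have U: "{\<theta>\<in>cube e. P \<theta>} = A \<union> B" and D: "A \<inter> B = {}" unfolding A_def B_def by auto
  have cube_upd: "\<And>\<theta> c. \<theta> \<in> cube e \<Longrightarrow> \<theta>(j:=c) \<in> cube e"
    unfolding cube_def using assms(1) by (auto simp: PiE_iff extensional_def)
  have img: "B = (\<lambda>\<theta>. \<theta>(j:=True)) ` A"
  proof
    show "B \<subseteq> (\<lambda>\<theta>. \<theta>(j:=True)) ` A"
    proof
      fix \<theta> assume "\<theta> \<in> B"
      then have "\<theta>(j:=False) \<in> A" "\<theta> = (\<theta>(j:=False))(j:=True)"
        unfolding A_def B_def using assms(3)[of \<theta> False] cube_upd by (auto simp: fun_eq_iff)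
      then show "\<theta> \<in> (\<lambda>\<theta>. \<theta>(j:=True)) ` A" by blast
    qed
  next
    show "(\<lambda>\<theta>. \<theta>(j:=True)) ` A \<subseteq> B"
      unfolding A_def B_def using assms(3) cube_upd by auto
  qed
  have inj: "inj_on (\<lambda>\<theta>. \<theta>(j:=True)) A"
    unfolding A_def inj_on_def by (auto simp: fun_eq_iff)
  have "prod g {\<theta>\<in>cube e. P \<theta>} = prod g A * prod g B"
    unfolding U by (rule prod.union_disjoint) (use fc D in \<open>auto simp: A_def B_def\<close>)
  also have "prod g B = prod (\<lambda>\<theta>. g (\<theta>(j:=True))) A"
    unfolding img by (subst prod.reindex[OF inj]) (simp add: comp_def)
  finally show ?thesis unfolding A_def .
qed

context core
begin

lemma S4: "(avg Om (\<lambda>\<xi>. (\<Prod>i\<in>I. abar f R j i \<xi>) * Bp f R j \<xi>))^2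
   \<le> avg Om (\<lambda>\<xi>. (\<Prod>i\<in>I. abar f R j i \<xi>)^2) * avg Om (\<lambda>\<xi>. (Bp f R j \<xi>)^2)"
  by (rule avg_CS)

lemma pt_flip0: "j \<in> R \<Longrightarrow> \<not> \<theta> j \<Longrightarrow> pt (upd \<xi> XL j (\<xi> U0 j)) (src R i \<theta>) = pt \<xi> (src (R - {j}) i \<theta>)"
  unfolding pt_def upd_def src_def by (auto simp: fun_eq_iff restrict_def)

lemma pt_flip1: "j \<in> R \<Longrightarrow> \<not> \<theta> j \<Longrightarrow> pt (upd \<xi> XL j (\<xi> U1 j)) (src R i \<theta>) = pt \<xi> (src (R - {j}) i (\<theta>(j:=True)))"
  unfolding pt_def upd_def src_def by (auto simp: fun_eq_iff restrict_def)

lemma G_eq: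
  assumes "j \<in> R" "R \<subseteq> e"
  shows "b f R j (upd \<xi> XL j (\<xi> U0 j)) * b f R j (upd \<xi> XL j (\<xi> U1 j)) = Phi f (R - {j}) \<xi>"
proof -
  have je: "j \<in> e" using assms by auto
  define R' where "R' = R - {j}"
  have Z': "Z R' = {\<theta>\<in>cube e. (\<forall>k\<in>R'. \<not> \<theta> k)}" unfolding Z_def ..
  have NZ': "NZ R' = {\<theta>\<in>cube e. \<not> (\<forall>k\<in>R'. \<not> \<theta> k)}" unfolding NZ_def Z_def by auto
  have Z0: "{\<theta>\<in>cube e. (\<forall>k\<in>R'. \<not> \<theta> k) \<and> \<not> \<theta> j} = Z R"
    unfolding Z_def R'_def using assms by auto
  have NZ0: "{\<theta>\<in>cube e. \<not> (\<forall>k\<in>R'. \<not> \<theta> k) \<and> \<not> \<theta> j} = {\<theta>\<in>NZ R. \<not> \<theta> j}"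
    unfolding NZ_def Z_def R'_def using assms by auto
  have indep: "\<And>\<theta> c. (\<forall>k\<in>R'. \<not> (\<theta>(j:=c)) k) = (\<forall>k\<in>R'. \<not> \<theta> k)"
    unfolding R'_def by auto
  have indep2: "\<And>\<theta> c. (\<not> (\<forall>k\<in>R'. \<not> (\<theta>(j:=c)) k)) = (\<not> (\<forall>k\<in>R'. \<not> \<theta> k))"
    unfolding R'_def by auto
  have ZP: "(\<Prod>\<theta>\<in>Z R'. nu (pt \<xi> (src R' undefined \<theta>)) - 1) =
     (\<Prod>\<theta>\<in>Z R. nu (pt \<xi> (src R' undefined \<theta>)) - 1) * (\<Prod>\<theta>\<in>Z R. nu (pt \<xi> (src R' undefined (\<theta>(j:=True)))) - 1)"
    unfolding Z' using prod_flip[OF je fin_e, of "\<lambda>\<theta>. \<forall>k\<in>R'. \<not> \<theta> k", OF indep] Z0 by simp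
  have NZP: "\<And>i. (\<Prod>\<theta>\<in>NZ R'. f i (pt \<xi> (src R' i \<theta>))) =
     (\<Prod>\<theta>\<in>{\<theta>\<in>NZ R. \<not> \<theta> j}. f i (pt \<xi> (src R' i \<theta>))) * (\<Prod>\<theta>\<in>{\<theta>\<in>NZ R. \<not> \<theta> j}. f i (pt \<xi> (src R' i (\<theta>(j:=True)))))"
    unfolding NZ' using prod_flip[OF je fin_e, of "\<lambda>\<theta>. \<not> (\<forall>k\<in>R'. \<not> \<theta> k)", OF indep2] NZ0 by simp
  have b0: "b f R j (upd \<xi> XL j (\<xi> U0 j)) = (\<Prod>\<theta>\<in>Z R. nu (pt \<xi> (src R' undefined \<theta>)) - 1) *
     (\<Prod>i\<in>I. \<Prod>\<theta>\<in>{\<theta>\<in>NZ R. \<not> \<theta> j}. f i (pt \<xi> (src R' i \<theta>)))"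
  proof -
    have 1: "\<And>\<theta> i. \<theta> \<in> Z R \<Longrightarrow> pt (upd \<xi> XL j (\<xi> U0 j)) (src R i \<theta>) = pt \<xi> (src R' i \<theta>)"
      unfolding R'_def by (rule pt_flip0) (use assms in \<open>auto simp: Z_def\<close>)
    have 2: "\<And>\<theta> i. \<theta> \<in> {\<theta>\<in>NZ R. \<not> \<theta> j} \<Longrightarrow> pt (upd \<xi> XL j (\<xi> U0 j)) (src R i \<theta>) = pt \<xi> (src R' i \<theta>)"
      unfolding R'_def by (rule pt_flip0) (use assms in auto)
    have 3: "\<And>i. (\<Prod>\<theta>\<in>{\<theta>\<in>NZ R. \<not> \<theta> j}. f i (pt (upd \<xi> XL j (\<xi> U0 j)) (src R i \<theta>))) = (\<Prod>\<theta>\<in>{\<theta>\<in>NZ R. \<not> \<theta> j}. f i (pt \<xi> (src R' i \<theta>)))"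
      by (rule prod.cong[OF refl]) (simp only: 2)
    have 4: "(\<Prod>\<theta>\<in>Z R. nu (pt (upd \<xi> XL j (\<xi> U0 j)) (src R undefined \<theta>)) - 1) = (\<Prod>\<theta>\<in>Z R. nu (pt \<xi> (src R' undefined \<theta>)) - 1)"
      by (rule prod.cong[OF refl]) (simp only: 1)
    show ?thesis unfolding b_def by (simp only: 3 4)
  qed
  have b1: "b f R j (upd \<xi> XL j (\<xi> U1 j)) = (\<Prod>\<theta>\<in>Z R. nu (pt \<xi> (src R' undefined (\<theta>(j:=True)))) - 1) *
     (\<Prod>i\<in>I. \<Prod>\<theta>\<in>{\<theta>\<in>NZ R. \<not> \<theta> j}. f i (pt \<xi> (src R' i (\<theta>(j:=True)))))"
  proof -
    have 1: "\<And>\<theta> i. \<theta> \<in> Z R \<Longrightarrow> pt (upd \<xi> XL j (\<xi> U1 j)) (src R i \<theta>) = pt \<xi> (src R' i (\<theta>(j:=True)))"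
      unfolding R'_def by (rule pt_flip1) (use assms in \<open>auto simp: Z_def\<close>)
    have 2: "\<And>\<theta> i. \<theta> \<in> {\<theta>\<in>NZ R. \<not> \<theta> j} \<Longrightarrow> pt (upd \<xi> XL j (\<xi> U1 j)) (src R i \<theta>) = pt \<xi> (src R' i (\<theta>(j:=True)))"
      unfolding R'_def by (rule pt_flip1) (use assms in auto)
    have 3: "\<And>i. (\<Prod>\<theta>\<in>{\<theta>\<in>NZ R. \<not> \<theta> j}. f i (pt (upd \<xi> XL j (\<xi> U1 j)) (src R i \<theta>))) = (\<Prod>\<theta>\<in>{\<theta>\<in>NZ R. \<not> \<theta> j}. f i (pt \<xi> (src R' i (\<theta>(j:=True)))))"
      by (rule prod.cong[OF refl]) (simp only: 2)
    have 4: "(\<Prod>\<theta>\<in>Z R. nu (pt (upd \<xi> XL j (\<xi> U1 j)) (src R undefined \<theta>)) - 1) = (\<Prod>\<theta>\<in>Z R. nu (pt \<xi> (src R' undefined (\<theta>(j:=True)))) - 1)"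
      by (rule prod.cong[OF refl]) (simp only: 1)
    show ?thesis unfolding b_def by (simp only: 3 4)
  qed
  show ?thesis unfolding b0 b1 Phi_def R'_def[symmetric] ZP NZP by (simp add: prod.distrib mult_ac)
qed

lemma S5:
  assumes "j \<in> R" "R \<subseteq> e"
  shows "avg Om (\<lambda>\<xi>. (Bp f R j \<xi>)^2) = T f (R - {j})"
proof -
  have je: "j \<in> e" using assms by auto
  define G where "G = (\<lambda>\<xi>. b f R j (upd \<xi> XL j (\<xi> U0 j)) * b f R j (upd \<xi> XL j (\<xi> U1 j)))"
  have Gc: "\<And>\<xi> s t. G (upd (upd \<xi> U1 j t) U0 j s) = b f R j (upd \<xi> XL j s) * b f R j (upd \<xi> XL j t)"
  proof -
    fix \<xi> s t
    let ?\<zeta> = "upd (upd \<xi> U1 j t) U0 j s"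
    have a0: "?\<zeta> U0 j = s" by (simp add: upd_apply_same)
    have a1: "?\<zeta> U1 j = t" by (simp add: upd_apply_other upd_apply_same)
    have bb: "\<And>v. b f R j (upd ?\<zeta> XL j v) = b f R j (upd \<xi> XL j v)"
    proof -
      fix v
      have "upd ?\<zeta> XL j v = upd (upd (upd \<xi> XL j v) U1 j t) U0 j s"
        by (simp add: upd_comm[of U0 XL] upd_comm[of U1 XL])
      then show "b f R j (upd ?\<zeta> XL j v) = b f R j (upd \<xi> XL j v)"
        by (simp add: b_upd_other assms)
    qed
    show "G ?\<zeta> = b f R j (upd \<xi> XL j s) * b f R j (upd \<xi> XL j t)"
      unfolding G_def a0 a1 bb ..
  qed
  have "avg Om G = avg Om (\<lambda>\<xi>. avg (W j) (\<lambda>s. G (upd \<xi> U0 j s)))"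
    by (rule RS[OF LS_U0 je])
  also have "\<dots> = avg Om (\<lambda>\<xi>. avg (W j) (\<lambda>t. avg (W j) (\<lambda>s. G (upd (upd \<xi> U1 j t) U0 j s))))"
    by (rule RS[OF LS_U1 je])
  also have "\<dots> = avg Om (\<lambda>\<xi>. (Bp f R j \<xi>)^2)"
    unfolding Gc Bp_def by (simp add: avg_multc avg_cmult power2_eq_square)
  finally have "avg Om (\<lambda>\<xi>. (Bp f R j \<xi>)^2) = avg Om G" ..
  also have "\<dots> = T f (R - {j})"
    unfolding T_def G_def using G_eq[OF assms] by simp
  finally show ?thesis .
qed

end

lemma prod_le_one_plus_sum_pow:
  fixes x :: "'i \<Rightarrow> real"
  assumes "finite I" "\<And>i. i \<in> I \<Longrightarrow> 0 \<le> x i"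
  shows "(\<Prod>i\<in>I. x i) \<le> 1 + (\<Sum>i\<in>I. x i ^ card I)"
proof (cases "I = {}")
  case True then show ?thesis by simp
next
  case False
  define M where "M = Max (x ` I)"
  have "M \<in> x ` I" unfolding M_def using assms False by simp
  then obtain i0 where i0: "i0 \<in> I" "x i0 = M" by auto
  have le: "\<And>i. i \<in> I \<Longrightarrow> x i \<le> M" unfolding M_def using assms by simp
  have "(\<Prod>i\<in>I. x i) \<le> (\<Prod>i\<in>I. M)"
    by (rule prod_mono) (use assms le in auto)
  also have "\<dots> = x i0 ^ card I" using i0 by simp
  also have "\<dots> \<le> (\<Sum>i\<in>I. x i ^ card I)"
    by (rule member_le_sum[OF i0(1)]) (use assms in auto)
  finally show ?thesis by simp
qed

context core
begin

definition Lam where "Lam R j i \<xi> = avg (W j) (\<lambda>s. \<Prod>\<theta>\<in>Cj j. nu (pt (upd \<xi> (YL i) j s) (src R i \<theta>)) + 1)"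
definition Hs where "Hs j z0 z1 = avg (W j) (\<lambda>s. \<Prod>\<theta>\<in>Cj j. nu (mix e \<theta> z0 (z1(j:=s))) + 1)"
definition Qv where "Qv j p = avg (PiE (e - {j}) W \<times> PiE (e - {j}) W) (\<lambda>(z0,z1). Hs j z0 z1 ^ p)"
definition mR :: "'j set \<Rightarrow> ('j \<Rightarrow> 'a) \<Rightarrow> ('j \<Rightarrow> 'a) \<Rightarrow> 'j \<Rightarrow> 'a" where "mR R x y = (\<lambda>k. if k \<in> R then x k else y k)"
definition sw where "sw R i \<xi> = \<xi>(U0 := mR R (\<xi> XL) (\<xi> U0), U1 := mR R (\<xi> (YL i)) (\<xi> U1),
    XL := mR R (\<xi> U0) (\<xi> XL), YL i := mR R (\<xi> U1) (\<xi> (YL i)))"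

abbreviation fbound where "fbound f \<equiv> (\<forall>i\<in>I. \<forall>x\<in>X. \<bar>f i x\<bar> \<le> nu x + 1)"

lemma abs_a_le:
  assumes "\<zeta> \<in> Om" "i \<in> I" "fbound f"
  shows "\<bar>a f R j i \<zeta>\<bar> \<le> (\<Prod>\<theta>\<in>Cj j. nu (pt \<zeta> (src R i \<theta>)) + 1)"
proof -
  have "\<bar>a f R j i \<zeta>\<bar> = (\<Prod>\<theta>\<in>Cj j. \<bar>f i (pt \<zeta> (src R i \<theta>))\<bar>)" unfolding a_def by (simp add: abs_prod)
  also have "\<dots> \<le> (\<Prod>\<theta>\<in>Cj j. nu (pt \<zeta> (src R i \<theta>)) + 1)"
    by (rule prod_mono) (use assms pt_in[OF assms(1) src_LS[OF assms(2)]] in auto)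
  finally show ?thesis .
qed

lemma abar_le:
  assumes "\<xi> \<in> Om" "i \<in> I" "j \<in> e" "fbound f"
  shows "\<bar>abar f R j i \<xi>\<bar> \<le> Lam R j i \<xi>"
proof -
  have "\<bar>abar f R j i \<xi>\<bar> \<le> avg (W j) (\<lambda>s. \<bar>a f R j i (upd \<xi> (YL i) j s)\<bar>)"
    unfolding abar_def by (rule avg_abs)
  also have "\<dots> \<le> Lam R j i \<xi>"
    unfolding Lam_def
    by (rule avg_mono, rule abs_a_le) (use assms upd_in LS_YL in auto)
  finally show ?thesis .
qed

lemma Lam_nonneg:
  assumes "\<xi> \<in> Om" "i \<in> I" "j \<in> e"
  shows "0 \<le> Lam R j i \<xi>"
  unfolding Lam_def
proof (rule avg_nonneg, rule prod_nonneg)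
  fix s \<theta> assume "s \<in> W j"
  then have "upd \<xi> (YL i) j s \<in> Om" using assms upd_in LS_YL by auto
  then have "pt (upd \<xi> (YL i) j s) (src R i \<theta>) \<in> X" using pt_in src_LS assms by auto
  then show "0 \<le> nu (pt (upd \<xi> (YL i) j s) (src R i \<theta>)) + 1" using nu_nonneg X_def by fastforce
qed

lemma S7:
  assumes "j \<in> e" "fbound f"
  shows "avg Om (\<lambda>\<xi>. (\<Prod>i\<in>I. abar f R j i \<xi>)^2) \<le> 1 + (\<Sum>i\<in>I. avg Om (\<lambda>\<xi>. Lam R j i \<xi> ^ (2 * card I)))"
proof -
  have pw: "(\<Prod>i\<in>I. abar f R j i \<xi>)^2 \<le> 1 + (\<Sum>i\<in>I. Lam R j i \<xi> ^ (2 * card I))" if "\<xi> \<in> Om" for \<xi>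
  proof -
    have "\<bar>\<Prod>i\<in>I. abar f R j i \<xi>\<bar> \<le> (\<Prod>i\<in>I. Lam R j i \<xi>)"
      unfolding abs_prod by (rule prod_mono) (use that assms abar_le in auto)
    then have "(\<Prod>i\<in>I. abar f R j i \<xi>)^2 \<le> (\<Prod>i\<in>I. Lam R j i \<xi>)^2"
      by (metis abs_ge_zero power2_abs power_mono)
    also have "\<dots> = (\<Prod>i\<in>I. (Lam R j i \<xi>)^2)" by (simp add: prod_power_distrib)
    also have "\<dots> \<le> 1 + (\<Sum>i\<in>I. ((Lam R j i \<xi>)^2) ^ card I)"
      by (rule prod_le_one_plus_sum_pow[OF fin_I]) simp
    finally show ?thesis by (simp add: power_mult)
  qed
  have "avg Om (\<lambda>\<xi>. (\<Prod>i\<in>I. abar f R j i \<xi>)^2) \<le> avg Om (\<lambda>\<xi>. 1 + (\<Sum>i\<in>I. Lam R j i \<xi> ^ (2 * card I)))"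
    by (rule avg_mono) (use pw in auto)
  also have "\<dots> = 1 + (\<Sum>i\<in>I. avg Om (\<lambda>\<xi>. Lam R j i \<xi> ^ (2 * card I)))"
    by (simp add: avg_add avg_sum avg_const fin_Om ne_Om)
  finally show ?thesis .
qed

lemma pt_sw:
  assumes "j \<in> R" "R \<subseteq> e" "\<theta> j"
  shows "pt (upd \<xi> (YL i) j s) (src R i \<theta>) = mix e \<theta> (restrict (sw R i \<xi> U0) (e - {j})) ((restrict (sw R i \<xi> U1) (e - {j}))(j:=s))"
  using assms unfolding pt_def upd_def src_def mix_def sw_def mR_def
  by (auto simp: fun_eq_iff restrict_def)

lemma Lam_sw:
  assumes "j \<in> R" "R \<subseteq> e"
  shows "Lam R j i \<xi> = Hs j (restrict (sw R i \<xi> U0) (e - {j})) (restrict (sw R i \<xi> U1) (e - {j}))"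
  unfolding Lam_def Hs_def
  by (rule avg_cong, rule prod.cong[OF refl]) (use assms pt_sw in \<open>auto simp: Cj_def\<close>)

lemma sw_in:
  assumes "\<xi> \<in> Om" "i \<in> I" "R \<subseteq> e"
  shows "sw R i \<xi> \<in> Om"
proof -
  have m: "\<And>x y. x \<in> X \<Longrightarrow> y \<in> X \<Longrightarrow> mR R x y \<in> X"
    unfolding X_def mR_def using assms(3) by (auto simp: PiE_iff extensional_def)
  have "\<And>l. l \<in> LS \<Longrightarrow> \<xi> l \<in> X" using assms(1) Om_X by auto
  then show ?thesis using assms(1,2) m LS_U0 LS_U1 LS_XL LS_YL[OF assms(2)]
    unfolding Om_def sw_def by (auto simp: PiE_iff extensional_def)
qed

lemma sw_sw: "sw R i (sw R i \<xi>) = \<xi>"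
  unfolding sw_def mR_def by (auto simp: fun_eq_iff)

lemma avg_sw:
  fixes G :: "('i lab \<Rightarrow> 'j \<Rightarrow> 'a) \<Rightarrow> real"
  assumes "i \<in> I" "R \<subseteq> e"
  shows "avg Om (\<lambda>\<xi>. G (sw R i \<xi>)) = avg Om G"
proof -
  have "sum (\<lambda>\<xi>. G (sw R i \<xi>)) Om = sum G Om"
    by (rule sum.reindex_bij_witness[of _ "sw R i" "sw R i"]) (use assms sw_in sw_sw in auto)
  then show ?thesis unfolding avg_def by simp
qed

lemma S8:
  assumes "j \<in> R" "R \<subseteq> e" "i \<in> I"
  shows "avg Om (\<lambda>\<xi>. Lam R j i \<xi> ^ p) = Qv j p"
proof -
  define G where "G = (\<lambda>\<zeta>::'i lab \<Rightarrow> 'j \<Rightarrow> 'a. Hs j (restrict (\<zeta> U0) (e - {j})) (restrict (\<zeta> U1) (e - {j})) ^ p)"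
  have "avg Om (\<lambda>\<xi>. Lam R j i \<xi> ^ p) = avg Om (\<lambda>\<xi>. G (sw R i \<xi>))"
    unfolding G_def Lam_sw[OF assms(1,2)] ..
  also have "\<dots> = avg Om G" by (rule avg_sw[OF assms(3,2)])
  also have "\<dots> = avg (X \<times> X) (\<lambda>(x,y). Hs j (restrict x (e - {j})) (restrict y (e - {j})) ^ p)"
    unfolding G_def by (rule PAIR)
  also have "\<dots> = Qv j p"
    unfolding Qv_def X_def
    by (rule avg_pair_restrict[of e "e - {j}" W "\<lambda>x y. Hs j x y ^ p"]) (use fin_e fin_W ne_W in auto)
  finally show ?thesis .
qed

lemma Hs_nonneg:
  assumes "z0 \<in> PiE (e - {j}) W" "z1 \<in> PiE (e - {j}) W" "j \<in> e"
  shows "0 \<le> Hs j z0 z1"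
  unfolding Hs_def
proof (rule avg_nonneg, rule prod_nonneg)
  fix s \<theta> assume "s \<in> W j" "\<theta> \<in> Cj j"
  then have "mix e \<theta> z0 (z1(j:=s)) \<in> X" using assms unfolding X_def mix_def Cj_def
    by (auto simp: PiE_iff)
  then show "0 \<le> nu (mix e \<theta> z0 (z1(j:=s))) + 1" using nu_nonneg X_def by fastforce
qed

lemma Qv_nonneg: "j \<in> e \<Longrightarrow> 0 \<le> Qv j (2 * p)"
  unfolding Qv_def
proof (rule avg_nonneg)
  fix z :: "('j \<Rightarrow> 'a) \<times> ('j \<Rightarrow> 'a)"
  have "\<And>x::real. 0 \<le> x ^ (2 * p)" by (simp add: power_mult)
  then show "0 \<le> (case z of (z0, z1) \<Rightarrow> Hs j z0 z1 ^ (2 * p))" by (cases z) simp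
qed

lemma STEP:
  assumes "j \<in> R" "R \<subseteq> e" "fbound f"
  shows "(T f R)^2 \<le> (1 + real (card I) * Qv j (2 * card I)) * T f (R - {j}) \<and> 0 \<le> T f (R - {j})"
proof -
  have je: "j \<in> e" using assms by auto
  have T0: "T f (R - {j}) = avg Om (\<lambda>\<xi>. (Bp f R j \<xi>)^2)" using S5[OF assms(1,2)] by simp
  have nn: "0 \<le> T f (R - {j})" unfolding T0 by (rule avg_nonneg) simp
  have "(T f R)^2 \<le> avg Om (\<lambda>\<xi>. (\<Prod>i\<in>I. abar f R j i \<xi>)^2) * T f (R - {j})"
    unfolding S2[OF assms(1) je] S3[OF assms(1) je] T0 by (rule S4)
  also have "\<dots> \<le> (1 + real (card I) * Qv j (2 * card I)) * T f (R - {j})"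
  proof (rule mult_right_mono[OF _ nn])
    have "avg Om (\<lambda>\<xi>. (\<Prod>i\<in>I. abar f R j i \<xi>)^2) \<le> 1 + (\<Sum>i\<in>I. avg Om (\<lambda>\<xi>. Lam R j i \<xi> ^ (2 * card I)))"
      by (rule S7[OF je assms(3)])
    also have "\<dots> = 1 + real (card I) * Qv j (2 * card I)"
      using S8[OF assms(1,2)] by simp
    finally show "avg Om (\<lambda>\<xi>. (\<Prod>i\<in>I. abar f R j i \<xi>)^2) \<le> 1 + real (card I) * Qv j (2 * card I)" .
  qed
  finally show ?thesis using nn by simp
qed

lemma CHAIN:
  assumes "\<forall>j\<in>e. Qv j (2 * card I) \<le> C" "0 \<le> C" "fbound f"
  shows "R \<subseteq> e \<Longrightarrow> \<bar>T f R\<bar> ^ (2 ^ card R) \<le> (1 + real (card I) * C) ^ (2 ^ card R - 1) * \<bar>T f {}\<bar>"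
proof -
  assume "R \<subseteq> e"
  have "finite R" using \<open>R \<subseteq> e\<close> fin_e finite_subset by blast
  then show ?thesis using \<open>R \<subseteq> e\<close>
  proof (induction R rule: finite_induct)
    case empty then show ?case by simp
  next
    case (insert j R)
    define \<Gamma> where "\<Gamma> = 1 + real (card I) * C"
    have G0: "0 \<le> \<Gamma>" unfolding \<Gamma>_def using assms by simp
    have je: "j \<in> e" using insert by auto
    have st: "(T f (insert j R))^2 \<le> (1 + real (card I) * Qv j (2 * card I)) * T f (R)"
      and nn: "0 \<le> T f R"
      using STEP[of j "insert j R" f] insert assms by auto
    have "(1 + real (card I) * Qv j (2 * card I)) \<le> \<Gamma>"
      unfolding \<Gamma>_def using assms je by (simp add: mult_left_mono)
    then have st2: "\<bar>T f (insert j R)\<bar>^2 \<le> \<Gamma> * \<bar>T f R\<bar>"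
      using st nn by (metis abs_of_nonneg mult_right_mono order_trans power2_abs)
    have IH: "\<bar>T f R\<bar> ^ (2 ^ card R) \<le> \<Gamma> ^ (2 ^ card R - 1) * \<bar>T f {}\<bar>"
      using insert unfolding \<Gamma>_def by auto
    have "\<bar>T f (insert j R)\<bar> ^ (2 ^ card (insert j R)) = (\<bar>T f (insert j R)\<bar>^2) ^ (2 ^ card R)"
    proof -
      have "2 ^ card (insert j R) = 2 * (2::nat) ^ card R" using insert by simp
      then show ?thesis by (simp only: power_mult)
    qed
    also have "\<dots> \<le> (\<Gamma> * \<bar>T f R\<bar>) ^ (2 ^ card R)"
      by (rule power_mono[OF st2]) simp
    also have "\<dots> = \<Gamma> ^ (2 ^ card R) * \<bar>T f R\<bar> ^ (2 ^ card R)" by (simp add: power_mult_distrib)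
    also have "\<dots> \<le> \<Gamma> ^ (2 ^ card R) * (\<Gamma> ^ (2 ^ card R - 1) * \<bar>T f {}\<bar>)"
      by (rule mult_left_mono[OF IH]) (use G0 in simp)
    also have "\<dots> = \<Gamma> ^ (2 ^ card (insert j R) - 1) * \<bar>T f {}\<bar>"
    proof -
      have "2 ^ card R + (2 ^ card R - 1) = 2 ^ card (insert j R) - (1::nat)"
        using insert by simp
      then show ?thesis by (metis mult.assoc power_add)
    qed
    finally show ?case unfolding \<Gamma>_def .
  qed
qed

end

lemma pow_sum_bound:
  fixes g :: "'b \<Rightarrow> real"
  assumes "finite A" "A \<noteq> {}" "\<And>a. a \<in> A \<Longrightarrow> 0 \<le> g a"
  shows "(\<Sum>a\<in>A. g a) ^ p \<le> real (card A) ^ p * (\<Sum>a\<in>A. g a ^ p)"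
proof -
  define M where "M = Max (g ` A)"
  have "M \<in> g ` A" unfolding M_def using assms by simp
  then obtain a0 where a0: "a0 \<in> A" "g a0 = M" by auto
  have le: "\<And>a. a \<in> A \<Longrightarrow> g a \<le> M" unfolding M_def using assms by simp
  have "(\<Sum>a\<in>A. g a) \<le> real (card A) * M"
    using sum_bounded_above[of A g M] le by simp
  moreover have "0 \<le> (\<Sum>a\<in>A. g a)" using assms by (simp add: sum_nonneg)
  ultimately have "(\<Sum>a\<in>A. g a) ^ p \<le> (real (card A) * M) ^ p" by (simp add: power_mono)
  also have "\<dots> = real (card A) ^ p * g a0 ^ p" using a0 by (simp add: power_mult_distrib)
  also have "\<dots> \<le> real (card A) ^ p * (\<Sum>a\<in>A. g a ^ p)"
    by (rule mult_left_mono, rule member_le_sum[OF a0(1)]) (use assms in auto)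
  finally show ?thesis .
qed

context core
begin

definition IS where "IS j S z0 z1 = avg (W j \<times> W j) (\<lambda>(y0, y1). \<Prod>\<theta>\<in>cube e. pw (\<theta> \<in> S) (nu (mix e \<theta> (z0(j := y0)) (z1(j := y1)))))"

lemma mix_in: "x \<in> X \<Longrightarrow> y \<in> X \<Longrightarrow> mix e \<theta> x y \<in> X"
  unfolding X_def mix_def by (auto simp: PiE_iff)

lemma upd_X: "j \<in> e \<Longrightarrow> z \<in> PiE (e - {j}) W \<Longrightarrow> y \<in> W j \<Longrightarrow> z(j := y) \<in> X"
  unfolding X_def by (auto simp: PiE_iff extensional_def)

lemma IS_alt:
  assumes "j \<in> e" "S \<subseteq> Cj j"
  shows "IS j S z0 z1 = avg (W j) (\<lambda>s. \<Prod>\<theta>\<in>S. nu (mix e \<theta> z0 (z1(j:=s))))"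
proof -
  have fc: "finite (cube e)" by (rule fin_cube)
  have Sc: "{\<theta>\<in>cube e. \<theta> \<in> S} = S" using assms by (auto simp: Cj_def)
  have mx: "\<And>\<theta> y0 s. \<theta> \<in> S \<Longrightarrow> mix e \<theta> (z0(j := y0)) (z1(j := s)) = mix e \<theta> z0 (z1(j:=s))"
    using assms unfolding Cj_def mix_def by (auto simp: fun_eq_iff restrict_def)
  have pr: "\<And>y0 s. (\<Prod>\<theta>\<in>cube e. pw (\<theta> \<in> S) (nu (mix e \<theta> (z0(j := y0)) (z1(j := s)))))
      = (\<Prod>\<theta>\<in>S. nu (mix e \<theta> z0 (z1(j:=s))))"
  proof -
    fix y0 s
    have "(\<Prod>\<theta>\<in>cube e. pw (\<theta> \<in> S) (nu (mix e \<theta> (z0(j := y0)) (z1(j := s)))))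
       = prod (\<lambda>\<theta>. nu (mix e \<theta> (z0(j := y0)) (z1(j := s)))) {\<theta>\<in>cube e. \<theta> \<in> S}"
      unfolding pw_def using prod.inter_filter[OF fc, of "\<lambda>\<theta>. nu (mix e \<theta> (z0(j := y0)) (z1(j := s)))" "\<lambda>\<theta>. \<theta> \<in> S"]
      by simp
    also have "\<dots> = (\<Prod>\<theta>\<in>S. nu (mix e \<theta> z0 (z1(j:=s))))"
      unfolding Sc by (rule prod.cong[OF refl]) (simp add: mx)
    finally show "?thesis y0 s" .
  qed
  show ?thesis unfolding IS_def avg_times by (simp add: pr avg_const fin_W ne_W assms(1))
qed

lemma Hs_sum:
  assumes "j \<in> e"
  shows "Hs j z0 z1 = (\<Sum>S\<in>Pow (Cj j). IS j S z0 z1)"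
proof -
  have "\<And>s. (\<Prod>\<theta>\<in>Cj j. nu (mix e \<theta> z0 (z1(j:=s))) + 1) = (\<Sum>S\<in>Pow (Cj j). \<Prod>\<theta>\<in>S. nu (mix e \<theta> z0 (z1(j:=s))))"
    by (subst prod_add[OF fin_Cj]) simp
  then have "Hs j z0 z1 = (\<Sum>S\<in>Pow (Cj j). avg (W j) (\<lambda>s. \<Prod>\<theta>\<in>S. nu (mix e \<theta> z0 (z1(j:=s)))))"
    unfolding Hs_def by (simp add: avg_sum)
  also have "\<dots> = (\<Sum>S\<in>Pow (Cj j). IS j S z0 z1)"
    by (rule sum.cong[OF refl]) (simp add: IS_alt assms)
  finally show ?thesis .
qed

lemma IS_nonneg:
  assumes "j \<in> e" "z0 \<in> PiE (e - {j}) W" "z1 \<in> PiE (e - {j}) W"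
  shows "0 \<le> IS j S z0 z1"
  unfolding IS_def
proof (rule avg_nonneg)
  fix y assume y: "y \<in> W j \<times> W j"
  obtain y0 y1 where yy: "y = (y0, y1)" by (cases y)
  have "\<And>\<theta>. 0 \<le> pw (\<theta> \<in> S) (nu (mix e \<theta> (z0(j := y0)) (z1(j := y1))))"
    unfolding pw_def using nu_nonneg mix_in upd_X assms y yy X_def by auto
  then show "0 \<le> (case y of (y0, y1) \<Rightarrow> \<Prod>\<theta>\<in>cube e. pw (\<theta> \<in> S) (nu (mix e \<theta> (z0(j := y0)) (z1(j := y1)))))"
    unfolding yy by (simp add: prod_nonneg)
qed

lemma Qv_bound:
  assumes "j \<in> e"
  shows "Qv j p \<le> real (card (Pow (Cj j))) ^ p *
     (\<Sum>S\<in>Pow (Cj j). \<bar>avg (PiE (e - {j}) W \<times> PiE (e - {j}) W) (\<lambda>(x0, x1). IS j S x0 x1 ^ p)\<bar>)"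
proof -
  define P where "P = PiE (e - {j}) W \<times> PiE (e - {j}) W"
  define N where "N = real (card (Pow (Cj j))) ^ p"
  have "Qv j p = avg P (\<lambda>z. Hs j (fst z) (snd z) ^ p)" unfolding Qv_def P_def split_def ..
  also have "\<dots> \<le> avg P (\<lambda>z. N * (\<Sum>S\<in>Pow (Cj j). IS j S (fst z) (snd z) ^ p))"
  proof (rule avg_mono)
    fix z assume "z \<in> P"
    then have zz: "fst z \<in> PiE (e - {j}) W \<and> snd z \<in> PiE (e - {j}) W" unfolding P_def by (rule mem_Times_iff[THEN iffD1])
    have zf: "fst z \<in> PiE (e - {j}) W" using zz by (rule conjunct1)
    have zs: "snd z \<in> PiE (e - {j}) W" using zz by (rule conjunct2)
    have "(\<Sum>S\<in>Pow (Cj j). IS j S (fst z) (snd z)) ^ p \<le> real (card (Pow (Cj j))) ^ p * (\<Sum>S\<in>Pow (Cj j). IS j S (fst z) (snd z) ^ p)"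
      apply (rule pow_sum_bound)
        apply (simp add: fin_Cj)
       apply blast
      apply (rule IS_nonneg[OF assms zf zs])
      done
    then show "Hs j (fst z) (snd z) ^ p \<le> N * (\<Sum>S\<in>Pow (Cj j). IS j S (fst z) (snd z) ^ p)"
      unfolding N_def by (simp only: Hs_sum[OF assms])
  qed
  also have "\<dots> = N * (\<Sum>S\<in>Pow (Cj j). avg P (\<lambda>z. IS j S (fst z) (snd z) ^ p))"
    by (simp only: avg_cmult avg_sum)
  also have "\<dots> \<le> N * (\<Sum>S\<in>Pow (Cj j). \<bar>avg P (\<lambda>z. IS j S (fst z) (snd z) ^ p)\<bar>)"
    by (rule mult_left_mono, rule sum_mono, rule abs_ge_self) (simp add: N_def)
  finally show ?thesis unfolding P_def N_def split_def .
qed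

end

lemma CORE:
  fixes e :: "'j set" and V :: "nat \<Rightarrow> 'j \<Rightarrow> 'a set" and nu :: "nat \<Rightarrow> ('j \<Rightarrow> 'a) \<Rightarrow> real" and I :: "'i set"
  assumes cr: "\<And>n. core e (V n) (nu n) I"
    and C0: "0 \<le> C"
    and Qb: "eventually (\<lambda>n. \<forall>j\<in>e. core.Qv e (V n) (nu n) j (2 * card I) \<le> C) sequentially"
    and tau: "(\<lambda>n. avg (PiE e (V n) \<times> PiE e (V n)) (\<lambda>(x,y). \<Prod>\<theta>\<in>cube e. nu n (mix e \<theta> x y) - 1)) \<longlonglongrightarrow> 0"
    and dp: "\<delta> > 0"
  shows "eventually (\<lambda>n. \<forall>f. (\<forall>i\<in>I. \<forall>x\<in>PiE e (V n). \<bar>f i x\<bar> \<le> nu n x + 1) \<longrightarrow>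
      \<bar>avg (PiE e (V n)) (\<lambda>x. (nu n x - 1) * (\<Prod>i\<in>I. dual (V n) e (f i) x))\<bar> \<le> \<delta>) sequentially"
proof -
  define \<Gamma> where "\<Gamma> = 1 + real (card I) * C"
  define P where "P = (2::nat) ^ card e"
  define \<eta> where "\<eta> = \<delta> ^ P / \<Gamma> ^ (P - 1)"
  have G1: "1 \<le> \<Gamma>" unfolding \<Gamma>_def using C0 by simp
  have eta: "0 < \<eta>" unfolding \<eta>_def using dp G1 by simp
  have ev: "eventually (\<lambda>n. dist (avg (PiE e (V n) \<times> PiE e (V n)) (\<lambda>(x,y). \<Prod>\<theta>\<in>cube e. nu n (mix e \<theta> x y) - 1)) 0 < \<eta>) sequentially"
    by (rule tendstoD[OF tau eta])
  show ?thesis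
  proof (rule eventually_mono[OF eventually_conj[OF Qb ev]], intro allI impI)
    fix n f
    assume H: "(\<forall>j\<in>e. core.Qv e (V n) (nu n) j (2 * card I) \<le> C) \<and>
        dist (avg (PiE e (V n) \<times> PiE e (V n)) (\<lambda>(x,y). \<Prod>\<theta>\<in>cube e. nu n (mix e \<theta> x y) - 1)) 0 < \<eta>"
      and fb: "\<forall>i\<in>I. \<forall>x\<in>PiE e (V n). \<bar>f i x\<bar> \<le> nu n x + 1"
    have fin_e: "finite e" using core.fin_e[OF cr] .
    have XX: "core.X e (V n) = PiE e (V n)" by (rule core.X_def[OF cr])
    have ch: "\<bar>core.T e (V n) (nu n) I f e\<bar> ^ P \<le> \<Gamma> ^ (P - 1) * \<bar>core.T e (V n) (nu n) I f {}\<bar>"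
      unfolding P_def \<Gamma>_def by (rule core.CHAIN[OF cr]) (use H C0 fb XX in auto)
    have Te: "core.T e (V n) (nu n) I f e = avg (PiE e (V n)) (\<lambda>x. (nu n x - 1) * (\<Prod>i\<in>I. dual (V n) e (f i) x))"
      using core.T_full[OF cr] XX by simp
    have T0: "\<bar>core.T e (V n) (nu n) I f {}\<bar> < \<eta>"
      using core.T_empty[OF cr] XX H by (simp add: dist_real_def)
    have "\<Gamma> ^ (P - 1) * \<bar>core.T e (V n) (nu n) I f {}\<bar> \<le> \<Gamma> ^ (P - 1) * \<eta>"
      using T0 G1 by (intro mult_left_mono) auto
    also have "\<dots> = \<delta> ^ P" unfolding \<eta>_def using G1 by simp
    finally have le: "\<bar>core.T e (V n) (nu n) I f e\<bar> ^ P \<le> \<delta> ^ P" using ch by simp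
    have "P = Suc (P - 1)" unfolding P_def by simp
    then have "\<bar>core.T e (V n) (nu n) I f e\<bar> \<le> \<delta>"
      using le power_le_imp_le_base[of "\<bar>core.T e (V n) (nu n) I f e\<bar>" "P - 1" \<delta>] dp by simp
    then show "\<bar>avg (PiE e (V n)) (\<lambda>x. (nu n x - 1) * (\<Prod>i\<in>I. dual (V n) e (f i) x))\<bar> \<le> \<delta>"
      using Te by simp
  qed
qed

lemma hs_facts:
  assumes hs: "hypergraph_system J V d H" and eH: "e \<in> H"
  shows "finite J" "e \<subseteq> J" "finite e" "e \<noteq> {}" "\<And>n k. k \<in> J \<Longrightarrow> finite (V n k)"
    "\<And>n k. k \<in> J \<Longrightarrow> V n k \<noteq> {}" "finite H"
proof -
  have h: "finite J" "d \<ge> 1" "\<forall>n. \<forall>j\<in>J. finite (V n j) \<and> V n j \<noteq> {}" "H \<subseteq> {e. e \<subseteq> J \<and> card e = d}"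
    using hs unfolding hypergraph_system_def by auto
  show "finite J" using h by simp
  show eJ: "e \<subseteq> J" using h eH by auto
  show fe: "finite e" using eJ h finite_subset by blast
  show "e \<noteq> {}" using h eH by auto
  show "\<And>n k. k \<in> J \<Longrightarrow> finite (V n k)" "\<And>n k. k \<in> J \<Longrightarrow> V n k \<noteq> {}" using h by auto
  have "H \<subseteq> Pow J" using h by auto
  then show "finite H" using h finite_subset by (metis finite_Pow_iff)
qed

lemma cr_lemma:
  assumes hs: "hypergraph_system J V d H" and pr: "pseudorandom J V H \<nu>" and eH: "e \<in> H" and fI: "finite I"
  shows "core e (V n) (\<nu> n e) I"
proof (rule core.intro)
  note f = hs_facts[OF hs eH]
  show "finite e" by (rule f(3))
  show "\<And>k. k \<in> e \<Longrightarrow> finite (V n k)" using f(2,5) by auto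
  show "\<And>k. k \<in> e \<Longrightarrow> V n k \<noteq> {}" using f(2,6) by auto
  show "finite I" by (rule fI)
  show "\<And>x. x \<in> PiE e (V n) \<Longrightarrow> 0 \<le> \<nu> n e x"
    using pr eH unfolding pseudorandom_def system_of_measures_def by auto
qed

lemma mix_restrict: "mix e \<theta> x0 x1 = mix e \<theta> (restrict x0 e) (restrict x1 e)"
  unfolding mix_def by (auto simp: fun_eq_iff restrict_def)

lemma tau_lim:
  assumes hs: "hypergraph_system J V d H" and pr: "pseudorandom J V H \<nu>" and eH: "e \<in> H"
  shows "(\<lambda>n. avg (PiE e (V n) \<times> PiE e (V n)) (\<lambda>(x,y). \<Prod>\<theta>\<in>cube e. \<nu> n e (mix e \<theta> x y) - 1)) \<longlonglongrightarrow> 0"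
proof -
  note f = hs_facts[OF hs eH]
  define C where "C = cube e"
  have fC: "finite C" unfolding C_def cube_def using f(3) by (simp add: finite_PiE)
  have neC: "C \<noteq> {}" unfolding C_def cube_def by (simp add: PiE_eq_empty_iff)
  define m where "m = (\<lambda>S n. avg (PiE e (V n) \<times> PiE e (V n)) (\<lambda>z. \<Prod>\<theta>\<in>S. \<nu> n e (mix e \<theta> (fst z) (snd z))))"
  have ii: "\<And>ex. (\<lambda>n. avg (PiE J (V n) \<times> PiE J (V n))
           (\<lambda>(x0, x1). \<Prod>e\<in>H. \<Prod>\<omega>\<in>cube e. pw (ex e \<omega>) (\<nu> n e (mix e \<omega> x0 x1)))) \<longlonglongrightarrow> 1"
    using pr unfolding pseudorandom_def by blast
  have mlim: "m S \<longlonglongrightarrow> 1" if SC: "S \<subseteq> C" for S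
  proof -
    define ex where "ex = (\<lambda>e' \<omega>. e' = e \<and> \<omega> \<in> S)"
    have pw_eq: "(\<Prod>e'\<in>H. \<Prod>\<omega>\<in>cube e'. pw (ex e' \<omega>) (\<nu> n e' (mix e' \<omega> x0 x1)))
        = (\<Prod>\<theta>\<in>S. \<nu> n e (mix e \<theta> (restrict x0 e) (restrict x1 e)))" for n x0 x1
    proof -
      have 1: "(\<Prod>\<omega>\<in>cube e'. pw (ex e' \<omega>) (\<nu> n e' (mix e' \<omega> x0 x1)))
          = (if e' = e then \<Prod>\<theta>\<in>S. \<nu> n e (mix e \<theta> x0 x1) else 1)" for e'
      proof (cases "e' = e")
        case True
        have Sc: "{\<omega>\<in>cube e. \<omega> \<in> S} = S" using SC unfolding C_def by auto
        have "(\<Prod>\<omega>\<in>cube e. pw (ex e \<omega>) (\<nu> n e (mix e \<omega> x0 x1))) = prod (\<lambda>\<omega>. \<nu> n e (mix e \<omega> x0 x1)) {\<omega>\<in>cube e. \<omega> \<in> S}"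
          unfolding pw_def ex_def using prod.inter_filter[OF fC[unfolded C_def], of "\<lambda>\<omega>. \<nu> n e (mix e \<omega> x0 x1)" "\<lambda>\<omega>. \<omega> \<in> S"]
          by simp
        then show ?thesis using True Sc by simp
      next
        case False
        then show ?thesis unfolding pw_def ex_def by simp
      qed
      have "(\<Prod>e'\<in>H. \<Prod>\<omega>\<in>cube e'. pw (ex e' \<omega>) (\<nu> n e' (mix e' \<omega> x0 x1))) = (\<Prod>\<theta>\<in>S. \<nu> n e (mix e \<theta> x0 x1))"
        unfolding 1 using prod.delta[OF f(7), of e "\<lambda>_. \<Prod>\<theta>\<in>S. \<nu> n e (mix e \<theta> x0 x1)"] eH by simp
      also have "\<dots> = (\<Prod>\<theta>\<in>S. \<nu> n e (mix e \<theta> (restrict x0 e) (restrict x1 e)))"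
        by (subst mix_restrict) (rule refl)
      finally show ?thesis .
    qed
    have eq: "avg (PiE J (V n) \<times> PiE J (V n)) (\<lambda>(x0, x1). \<Prod>e\<in>H. \<Prod>\<omega>\<in>cube e. pw (ex e \<omega>) (\<nu> n e (mix e \<omega> x0 x1)))
       = m S n" for n
    proof -
      have "avg (PiE J (V n) \<times> PiE J (V n)) (\<lambda>(x0, x1). \<Prod>e\<in>H. \<Prod>\<omega>\<in>cube e. pw (ex e \<omega>) (\<nu> n e (mix e \<omega> x0 x1)))
         = avg (PiE J (V n) \<times> PiE J (V n)) (\<lambda>(x0, x1). (\<lambda>x y. \<Prod>\<theta>\<in>S. \<nu> n e (mix e \<theta> x y)) (restrict x0 e) (restrict x1 e))"
        by (simp only: pw_eq)
      also have "\<dots> = avg (PiE e (V n) \<times> PiE e (V n)) (\<lambda>(x, y). \<Prod>\<theta>\<in>S. \<nu> n e (mix e \<theta> x y))"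
        by (rule avg_pair_restrict) (use f in auto)
      also have "\<dots> = m S n" unfolding m_def split_def ..
      finally show ?thesis .
    qed
    show ?thesis using ii[of ex] unfolding eq .
  qed
  have decomp: "avg (PiE e (V n) \<times> PiE e (V n)) (\<lambda>(x,y). \<Prod>\<theta>\<in>cube e. \<nu> n e (mix e \<theta> x y) - 1)
      = (\<Sum>S\<in>Pow C. (-1) ^ card (C - S) * m S n)" for n
  proof -
    have pt: "(\<Prod>\<theta>\<in>C. a \<theta> - 1) = (\<Sum>S\<in>Pow C. (-1) ^ card (C - S) * (\<Prod>\<theta>\<in>S. a \<theta>))" for a :: "_ \<Rightarrow> real"
    proof -
      have "(\<Prod>\<theta>\<in>C. a \<theta> - 1) = (\<Prod>\<theta>\<in>C. a \<theta> + (-1))" by simp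
      also have "\<dots> = (\<Sum>S\<in>Pow C. (\<Prod>\<theta>\<in>S. a \<theta>) * (\<Prod>\<theta>\<in>C - S. -1))" by (rule prod_add[OF fC])
      also have "\<dots> = (\<Sum>S\<in>Pow C. (-1) ^ card (C - S) * (\<Prod>\<theta>\<in>S. a \<theta>))" by (simp add: mult.commute)
      finally show ?thesis .
    qed
    have "avg (PiE e (V n) \<times> PiE e (V n)) (\<lambda>(x,y). \<Prod>\<theta>\<in>cube e. \<nu> n e (mix e \<theta> x y) - 1)
       = avg (PiE e (V n) \<times> PiE e (V n)) (\<lambda>z. \<Sum>S\<in>Pow C. (-1) ^ card (C - S) * (\<Prod>\<theta>\<in>S. \<nu> n e (mix e \<theta> (fst z) (snd z))))"
      unfolding split_def C_def[symmetric] pt ..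
    also have "\<dots> = (\<Sum>S\<in>Pow C. (-1) ^ card (C - S) * m S n)"
      unfolding m_def by (simp only: avg_sum avg_cmult)
    finally show ?thesis .
  qed
  have "(\<lambda>n. \<Sum>S\<in>Pow C. (-1) ^ card (C - S) * m S n) \<longlonglongrightarrow> (\<Sum>S\<in>Pow C. (-1) ^ card (C - S) * 1)"
    by (intro tendsto_intros mlim) auto
  also have "(\<Sum>S\<in>Pow C. (-1) ^ card (C - S) * 1) = (0::real)"
  proof -
    have "(\<Sum>S\<in>Pow C. (-1) ^ card (C - S) * (1::real)) = (\<Sum>S\<in>Pow C. (\<Prod>\<theta>\<in>S. 1) * (\<Prod>\<theta>\<in>C - S. -1))"
      by simp
    also have "\<dots> = (\<Prod>\<theta>\<in>C. 1 + (-1::real))" by (rule prod_add[OF fC, symmetric])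
    also have "\<dots> = 0" using fC neC by (simp add: card_gt_0_iff)
    finally show ?thesis .
  qed
  finally show ?thesis unfolding decomp .
qed


lemma Qb_lemma:
  assumes hs: "hypergraph_system J V d H" and pr: "pseudorandom J V H \<nu>" and eH: "e \<in> H"
  shows "\<exists>C\<ge>0. eventually (\<lambda>n. \<forall>j\<in>e. core.Qv e (V n) (\<nu> n e) j p \<le> C) sequentially"
proof -
  note f = hs_facts[OF hs eH]
  have cr: "\<And>n. core e (V n) (\<nu> n e) ({}::nat set)" by (rule cr_lemma[OF hs pr eH]) simp
  have Cj: "\<And>j. core.Cj e j = {\<theta>\<in>cube e. \<theta> j}" by (rule core.Cj_def[OF cr])
  define Ix where "Ix = Sigma e (\<lambda>j. Pow (core.Cj e j))"
  have fc: "finite (cube e)" unfolding cube_def using f(3) by (simp add: finite_PiE)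
  have fIx: "finite Ix" unfolding Ix_def Cj using f(3) fc by auto
  define A where "A = (\<lambda>n j S. avg (PiE (e - {j}) (V n) \<times> PiE (e - {j}) (V n)) (\<lambda>(x0,x1). core.IS e (V n) (\<nu> n e) j S x0 x1 ^ p))"
  have iii0: "\<And>j ex K. j \<in> e \<Longrightarrow> \<exists>C. \<forall>\<^sub>F n in sequentially.
          \<bar>avg (Vpts (V n) (e - {j}) \<times> Vpts (V n) (e - {j}))
             (\<lambda>(x0, x1). (avg (V n j \<times> V n j)
                (\<lambda>(y0, y1). \<Prod>\<omega>\<in>cube e.
                   pw (ex \<omega>) (\<nu> n e (mix e \<omega> (x0(j := y0)) (x1(j := y1)))))) ^ K)\<bar> \<le> C"
    using pr eH unfolding pseudorandom_def by blast
  have iii: "\<forall>x\<in>Ix. \<exists>C. eventually (\<lambda>n. \<bar>A n (fst x) (snd x)\<bar> \<le> C) sequentially"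
  proof
    fix x assume "x \<in> Ix"
    then have j: "fst x \<in> e" unfolding Ix_def by auto
    show "\<exists>C. eventually (\<lambda>n. \<bar>A n (fst x) (snd x)\<bar> \<le> C) sequentially"
      unfolding A_def core.IS_def[OF cr] using iii0[OF j, of "\<lambda>\<omega>. \<omega> \<in> snd x" p] .
  qed
  then obtain Cf where Cf: "\<forall>x\<in>Ix. eventually (\<lambda>n. \<bar>A n (fst x) (snd x)\<bar> \<le> Cf x) sequentially"
    by (metis bchoice)
  have ev: "eventually (\<lambda>n. \<forall>x\<in>Ix. \<bar>A n (fst x) (snd x)\<bar> \<le> Cf x) sequentially"
    by (rule eventually_ball_finite[OF fIx Cf])
  define Cb where "Cb = (\<Sum>j\<in>e. real (card (Pow (core.Cj e j))) ^ p * (\<Sum>S\<in>Pow (core.Cj e j). \<bar>Cf (j, S)\<bar>))"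
  have Cb0: "0 \<le> Cb" unfolding Cb_def by (intro sum_nonneg mult_nonneg_nonneg) auto
  show ?thesis
  proof (intro exI conjI)
    show "0 \<le> Cb" by (rule Cb0)
    show "eventually (\<lambda>n. \<forall>j\<in>e. core.Qv e (V n) (\<nu> n e) j p \<le> Cb) sequentially"
    proof (rule eventually_mono[OF ev], intro ballI)
      fix n j assume H: "\<forall>x\<in>Ix. \<bar>A n (fst x) (snd x)\<bar> \<le> Cf x" and j: "j \<in> e"
      have "core.Qv e (V n) (\<nu> n e) j p \<le> real (card (Pow (core.Cj e j))) ^ p * (\<Sum>S\<in>Pow (core.Cj e j). \<bar>A n j S\<bar>)"
        unfolding A_def by (rule core.Qv_bound[OF cr j])
      also have "\<dots> \<le> real (card (Pow (core.Cj e j))) ^ p * (\<Sum>S\<in>Pow (core.Cj e j). \<bar>Cf (j, S)\<bar>)"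
      proof (rule mult_left_mono, rule sum_mono)
        fix S assume "S \<in> Pow (core.Cj e j)"
        then have "(j, S) \<in> Ix" unfolding Ix_def using j by auto
        then have "\<bar>A n j S\<bar> \<le> Cf (j, S)" using H by fastforce
        then show "\<bar>A n j S\<bar> \<le> \<bar>Cf (j, S)\<bar>" by simp
      qed simp
      also have "\<dots> \<le> Cb" unfolding Cb_def
        by (rule member_le_sum[OF j]) (auto intro!: mult_nonneg_nonneg sum_nonneg simp: f(3))
      finally show "core.Qv e (V n) (\<nu> n e) j p \<le> Cb" .
    qed
  qed
qed

lemma finite_monomials: "finite K \<Longrightarrow> finite (monomials_le K D)"
proof -
  assume fK: "finite K"
  have "monomials_le K D \<subseteq> PiE K (\<lambda>_. {..D})"
  proof
    fix \<alpha> assume a: "\<alpha> \<in> monomials_le K D"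
    then have ext: "\<alpha> \<in> extensional K" and s: "sum \<alpha> K \<le> D" unfolding monomials_le_def by auto
    have "\<And>k. k \<in> K \<Longrightarrow> \<alpha> k \<le> D"
      using member_le_sum[of _ K \<alpha>] fK s by (meson le_trans zero_le)
    then show "\<alpha> \<in> PiE K (\<lambda>_. {..D})" using ext by (auto simp: PiE_iff)
  qed
  moreover have "finite (PiE K (\<lambda>_. {..D}))" using fK by (simp add: finite_PiE)
  ultimately show ?thesis by (rule finite_subset)
qed

theorem mainTheorem13:
  fixes J :: "'j set" and V :: "nat \<Rightarrow> 'j \<Rightarrow> 'a set" and d :: nat
    and H :: "'j set set" and \<nu> :: "nat \<Rightarrow> 'j set \<Rightarrow> ('j \<Rightarrow> 'a) \<Rightarrow> real"
    and e :: "'j set" and K :: "'k set" and D :: nat and M :: real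
  assumes "hypergraph_system J V d H"
    and "pseudorandom J V H \<nu>"
    and "e \<in> H"
    and "finite K"
  shows "\<forall>\<epsilon>>0. \<forall>\<^sub>F n in sequentially.
           \<forall>(P :: ('k \<Rightarrow> real) \<Rightarrow> real) (f :: 'k \<Rightarrow> ('j \<Rightarrow> 'a) \<Rightarrow> real).
             bounded_poly K D M P \<longrightarrow>
             (\<forall>k\<in>K. \<forall>x\<in>Vpts (V n) e. \<bar>f k x\<bar> \<le> \<nu> n e x + 1) \<longrightarrow>
             \<bar>avg (Vpts (V n) e)
                (\<lambda>x. (\<nu> n e x - 1) * P (\<lambda>k. dual (V n) e (f k) x))\<bar> \<le> \<epsilon>"
proof (intro allI impI)
  fix \<epsilon> :: real assume ep: "\<epsilon> > 0"
  note hs = assms(1) and pr = assms(2) and eH = assms(3) and fK = assms(4)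
  define A where "A = monomials_le K D"
  have fA: "finite A" unfolding A_def by (rule finite_monomials[OF fK])
  define Ia where "Ia = (\<lambda>\<alpha>::'k \<Rightarrow> nat. Sigma K (\<lambda>k. {..<\<alpha> k}))"
  have fIa: "\<And>\<alpha>. finite (Ia \<alpha>)" unfolding Ia_def using fK by auto
  define \<delta> where "\<delta> = \<epsilon> / (real (card A) * \<bar>M\<bar> + 1)"
  have dp: "\<delta> > 0" unfolding \<delta>_def using ep by (simp add: add_nonneg_pos)
  have each: "\<forall>\<alpha>\<in>A. eventually (\<lambda>n. \<forall>g. (\<forall>i\<in>Ia \<alpha>. \<forall>x\<in>PiE e (V n). \<bar>g i x\<bar> \<le> \<nu> n e x + 1) \<longrightarrow>
      \<bar>avg (PiE e (V n)) (\<lambda>x. (\<nu> n e x - 1) * (\<Prod>i\<in>Ia \<alpha>. dual (V n) e (g i) x))\<bar> \<le> \<delta>) sequentially"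
  proof
    fix \<alpha> assume "\<alpha> \<in> A"
    obtain C where C: "0 \<le> C" "eventually (\<lambda>n. \<forall>j\<in>e. core.Qv e (V n) (\<nu> n e) j (2 * card (Ia \<alpha>)) \<le> C) sequentially"
      using Qb_lemma[OF hs pr eH, of "2 * card (Ia \<alpha>)"] by blast
    show "eventually (\<lambda>n. \<forall>g. (\<forall>i\<in>Ia \<alpha>. \<forall>x\<in>PiE e (V n). \<bar>g i x\<bar> \<le> \<nu> n e x + 1) \<longrightarrow>
      \<bar>avg (PiE e (V n)) (\<lambda>x. (\<nu> n e x - 1) * (\<Prod>i\<in>Ia \<alpha>. dual (V n) e (g i) x))\<bar> \<le> \<delta>) sequentially"
      by (rule CORE[where nu="\<lambda>n. \<nu> n e", OF cr_lemma[OF hs pr eH fIa] C(1) C(2) tau_lim[OF hs pr eH] dp])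
  qed
  have ev: "eventually (\<lambda>n. \<forall>\<alpha>\<in>A. \<forall>g. (\<forall>i\<in>Ia \<alpha>. \<forall>x\<in>PiE e (V n). \<bar>g i x\<bar> \<le> \<nu> n e x + 1) \<longrightarrow>
      \<bar>avg (PiE e (V n)) (\<lambda>x. (\<nu> n e x - 1) * (\<Prod>i\<in>Ia \<alpha>. dual (V n) e (g i) x))\<bar> \<le> \<delta>) sequentially"
    by (rule eventually_ball_finite[OF fA each])
  show "\<forall>\<^sub>F n in sequentially.
           \<forall>(P :: ('k \<Rightarrow> real) \<Rightarrow> real) (f :: 'k \<Rightarrow> ('j \<Rightarrow> 'a) \<Rightarrow> real).
             bounded_poly K D M P \<longrightarrow>
             (\<forall>k\<in>K. \<forall>x\<in>Vpts (V n) e. \<bar>f k x\<bar> \<le> \<nu> n e x + 1) \<longrightarrow>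
             \<bar>avg (Vpts (V n) e)
                (\<lambda>x. (\<nu> n e x - 1) * P (\<lambda>k. dual (V n) e (f k) x))\<bar> \<le> \<epsilon>"
  proof (rule eventually_mono[OF ev], intro allI impI)
    fix n P f
    assume Hn: "\<forall>\<alpha>\<in>A. \<forall>g. (\<forall>i\<in>Ia \<alpha>. \<forall>x\<in>PiE e (V n). \<bar>g i x\<bar> \<le> \<nu> n e x + 1) \<longrightarrow>
      \<bar>avg (PiE e (V n)) (\<lambda>x. (\<nu> n e x - 1) * (\<Prod>i\<in>Ia \<alpha>. dual (V n) e (g i) x))\<bar> \<le> \<delta>"
      and bp: "bounded_poly K D M P"
      and fb: "\<forall>k\<in>K. \<forall>x\<in>Vpts (V n) e. \<bar>f k x\<bar> \<le> \<nu> n e x + 1"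
    obtain c where c: "\<forall>\<alpha>\<in>A. \<bar>c \<alpha>\<bar> \<le> M" and Peq: "\<And>y. P y = (\<Sum>\<alpha>\<in>A. c \<alpha> * (\<Prod>k\<in>K. y k ^ \<alpha> k))"
      using bp unfolding bounded_poly_def A_def by blast
    define X where "X = PiE e (V n)"
    define m where "m = (\<lambda>\<alpha>. avg X (\<lambda>x. (\<nu> n e x - 1) * (\<Prod>k\<in>K. dual (V n) e (f k) x ^ \<alpha> k)))"
    have mb: "\<bar>m \<alpha>\<bar> \<le> \<delta>" if "\<alpha> \<in> A" for \<alpha>
    proof -
      define g where "g = (\<lambda>i::'k \<times> nat. f (fst i))"
      have gb: "\<forall>i\<in>Ia \<alpha>. \<forall>x\<in>PiE e (V n). \<bar>g i x\<bar> \<le> \<nu> n e x + 1"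
        unfolding g_def Ia_def using fb by auto
      have pe: "(\<Prod>i\<in>Ia \<alpha>. dual (V n) e (g i) x) = (\<Prod>k\<in>K. dual (V n) e (f k) x ^ \<alpha> k)" for x
      proof -
        have "(\<Prod>i\<in>Ia \<alpha>. dual (V n) e (g i) x) = (\<Prod>k\<in>K. \<Prod>r\<in>{..<\<alpha> k}. dual (V n) e (f k) x)"
          unfolding Ia_def g_def using prod.Sigma[of K "\<lambda>k. {..<\<alpha> k}" "\<lambda>k r. dual (V n) e (f k) x"] fK
          by (simp add: split_def)
        also have "\<dots> = (\<Prod>k\<in>K. dual (V n) e (f k) x ^ \<alpha> k)" by simp
        finally show ?thesis .
      qed
      have "\<bar>avg (PiE e (V n)) (\<lambda>x. (\<nu> n e x - 1) * (\<Prod>i\<in>Ia \<alpha>. dual (V n) e (g i) x))\<bar> \<le> \<delta>"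
        using Hn that gb by blast
      then show ?thesis unfolding m_def X_def pe .
    qed
    have "avg X (\<lambda>x. (\<nu> n e x - 1) * P (\<lambda>k. dual (V n) e (f k) x)) = (\<Sum>\<alpha>\<in>A. c \<alpha> * m \<alpha>)"
    proof -
      have "avg X (\<lambda>x. (\<nu> n e x - 1) * P (\<lambda>k. dual (V n) e (f k) x))
          = avg X (\<lambda>x. \<Sum>\<alpha>\<in>A. c \<alpha> * ((\<nu> n e x - 1) * (\<Prod>k\<in>K. dual (V n) e (f k) x ^ \<alpha> k)))"
        unfolding Peq by (simp add: sum_distrib_left mult_ac)
      also have "\<dots> = (\<Sum>\<alpha>\<in>A. c \<alpha> * m \<alpha>)" unfolding m_def by (simp only: avg_sum avg_cmult)
      finally show ?thesis .
    qed
    then have "\<bar>avg X (\<lambda>x. (\<nu> n e x - 1) * P (\<lambda>k. dual (V n) e (f k) x))\<bar> \<le> (\<Sum>\<alpha>\<in>A. \<bar>c \<alpha>\<bar> * \<bar>m \<alpha>\<bar>)"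
      by (simp add: sum_abs[THEN order_trans] abs_mult)
    also have "\<dots> \<le> (\<Sum>\<alpha>\<in>A. \<bar>M\<bar> * \<delta>)"
    proof (rule sum_mono)
      fix \<alpha> assume a: "\<alpha> \<in> A"
      have "\<bar>c \<alpha>\<bar> \<le> \<bar>M\<bar>" using c a by force
      then show "\<bar>c \<alpha>\<bar> * \<bar>m \<alpha>\<bar> \<le> \<bar>M\<bar> * \<delta>" using mb[OF a] by (intro mult_mono) auto
    qed
    also have "\<dots> = real (card A) * \<bar>M\<bar> * \<delta>" by simp
    also have "\<dots> \<le> \<epsilon>"
    proof -
      have pos: "0 < real (card A) * \<bar>M\<bar> + 1" by (simp add: add_nonneg_pos)
      have "real (card A) * \<bar>M\<bar> * \<delta> = \<epsilon> * (real (card A) * \<bar>M\<bar> / (real (card A) * \<bar>M\<bar> + 1))"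
        unfolding \<delta>_def by (simp add: field_simps)
      also have "\<dots> \<le> \<epsilon> * 1" using pos ep by (intro mult_left_mono) auto
      finally show ?thesis by simp
    qed
    finally show "\<bar>avg (Vpts (V n) e) (\<lambda>x. (\<nu> n e x - 1) * P (\<lambda>k. dual (V n) e (f k) x))\<bar> \<le> \<epsilon>"
      unfolding X_def .
  qed
qed


end
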